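(* (1) For any $\lambda\in[0,1)$: $\omega\text{-}\mathrm{RL}\not\subseteq\mathbb{L}^{>\lambda}(\mathrm{QBA}|\mathrm{D})$. (2) For any $\lambda\in[0,1)$: $\omega\text{-}\mathrm{CFL}\setminus\omega\text{-}\mathrm{RL}\not\subseteq\mathbb{L}^{>\lambda}(\mathrm{QBA}|\mathrm{D})$. (3) $\mathbb{L}^{=1}(\mathrm{QBA}|\mathrm{D})\not\subseteq\omega\text{-}\mathrm{RL}$.
   Context: A quantum automaton is a tuple $\mathcal{A}=(\mathcal{H},|s_0\rangle,\Sigma,\{U_\sigma:\sigma\in\Sigma\},F)$ where $\mathcal{H}$ is a finite-dimensional complex Hilbert space, $|s_0\rangle$ a unit vector, $\Sigma$ a finite alphabet, each $U_\sigma$ unitary, and $F$ a subspace. For $w=\sigma_1\sigma_2\cdots\in\Sigma^\omega$, a unit vector $|\psi\rangle\in F$ and checkpoints $0\le n_1<n_2<\cdots$, the disturbing run is $|s_0\rangle$ and for $n\ge1$: $|s_n\rangle=U_{\sigma_n}|\psi\rangle$ if $n-1=n_i$ for some $i$, else $|s_n\rangle=U_{\sigma_n}|s_{n-1}\rangle$; $f^{\mathrm{D}}_{\mathcal{A}}(w)=\sup_{|\psi\rangle}\sup_{\{n_i\}}\inf_{i\ge1}|\langle\psi|s_{n_i}\rangle|^2$. $\mathcal{L}^{>\lambda}(\mathcal{A}|\mathrm{D})=\{w:f^{\mathrm{D}}_{\mathcal{A}}(w)>\lambda\}$, $\mathcal{L}^{=1}(\mathcal{A}|\mathrm{D})=\{w:f^{\mathrm{D}}_{\mathcal{A}}(w)=1\}$;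 $\mathbb{L}^{>\lambda}(\mathrm{QBA}|\mathrm{D})$, $\mathbb{L}^{=1}(\mathrm{QBA}|\mathrm{D})$ are the classes of all such languages over all quantum automata. $\omega\text{-}\mathrm{RL}$ (resp. $\omega\text{-}\mathrm{CFL}$) is the class of all $\omega$-languages $\bigcup_{i=1}^n U_iV_i^\omega$ with $U_i,V_i$ regular (resp. context-free) languages of finite words, $V^\omega$ being the set of infinite concatenations of nonempty words from $V$. *)

theory Defs
  imports "Jordan_Normal_Form.Schur_Decomposition" "HOL-Library.Omega_Words_Fun"
begin

section \<open>Finite words: regular and context-free languages over an alphabet\<close>

text \<open>A language of finite words over the finite alphabet Sigma is regular iff it is
accepted by a nondeterministic finite automaton (states: a finite set of naturals).\<close>

definition nfa_accepts ::
  "nat set \<Rightarrow> nat \<Rightarrow> (nat \<times> 'a \<times> nat) set \<Rightarrow> nat set \<Rightarrow> 'a list \<Rightarrow> bool" where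
  "nfa_accepts Q q0 \<delta> Fin w \<longleftrightarrow>
     (\<exists>qs. length qs = Suc (length w) \<and> qs ! 0 = q0 \<and>
        (\<forall>i<length w. (qs ! i, w ! i, qs ! Suc i) \<in> \<delta>) \<and> last qs \<in> Fin)"

definition regular_lang :: "'a set \<Rightarrow> 'a list set \<Rightarrow> bool" where
  "regular_lang \<Sigma> L \<longleftrightarrow>
     (\<exists>Q q0 \<delta> Fin. finite Q \<and> q0 \<in> Q \<and> Fin \<subseteq> Q \<and> \<delta> \<subseteq> Q \<times> \<Sigma> \<times> Q \<and>
        L = {w. set w \<subseteq> \<Sigma> \<and> nfa_accepts Q q0 \<delta> Fin w})"

text \<open>Context-free grammars: nonterminals are naturals, sentential forms are lists over
  nat + 'a (Inl = nonterminal, Inr = terminal), productions a finite set.\<close>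

definition cfg_step :: "(nat \<times> (nat + 'a) list) set \<Rightarrow> ((nat + 'a) list \<times> (nat + 'a) list) set" where
  "cfg_step P = {(u @ [Inl A] @ v, u @ rhs @ v) | u v A rhs. (A, rhs) \<in> P}"

definition context_free_lang :: "'a set \<Rightarrow> 'a list set \<Rightarrow> bool" where
  "context_free_lang \<Sigma> L \<longleftrightarrow>
     (\<exists>P S. finite P \<and> (\<forall>(A, rhs) \<in> P. \<forall>x \<in> set rhs. \<forall>a. x = Inr a \<longrightarrow> a \<in> \<Sigma>) \<and>
        L = {w. set w \<subseteq> \<Sigma> \<and> ([Inl S], map Inr w) \<in> (cfg_step P)\<^sup>*})"

section \<open>Infinite words and omega-languages\<close>

text \<open>Infinite words are maps nat => 'a (letter sigma_(n+1) is w n).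
  The infinite concatenation of the words v 0, v 1, ... is the infinite word whose
  prefix of length |v 0|+...+|v (k-1)| is v 0 @ ... @ v (k-1), for all k.\<close>

definition is_inf_concat :: "(nat \<Rightarrow> 'a list) \<Rightarrow> 'a word \<Rightarrow> bool" where
  "is_inf_concat v w \<longleftrightarrow>
     (\<forall>k. prefix (\<Sum>i<k. length (v i)) w = concat (map v [0..<k]))"

text \<open>V^omega: infinite concatenations of nonempty words from V.\<close>
definition omega_pow :: "'a list set \<Rightarrow> 'a word set" where
  "omega_pow V = {w. \<exists>v. (\<forall>i. v i \<in> V \<and> v i \<noteq> []) \<and> is_inf_concat v w}"

definition lang_conc :: "'a list set \<Rightarrow> 'a word set \<Rightarrow> 'a word set" where
  "lang_conc U W = {u \<frown> x | u x. u \<in> U \<and> x \<in> W}"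

text \<open>Letters are naturals; an alphabet is a nonempty finite set of naturals.\<close>

definition omega_RL :: "nat word set set" where
  "omega_RL = {L. \<exists>\<Sigma> ps. finite \<Sigma> \<and> \<Sigma> \<noteq> {} \<and>
      (\<forall>(U, V) \<in> set ps. regular_lang \<Sigma> U \<and> regular_lang \<Sigma> V) \<and>
      L = (\<Union>(U, V) \<in> set ps. lang_conc U (omega_pow V))}"

definition omega_CFL :: "nat word set set" where
  "omega_CFL = {L. \<exists>\<Sigma> ps. finite \<Sigma> \<and> \<Sigma> \<noteq> {} \<and>
      (\<forall>(U, V) \<in> set ps. context_free_lang \<Sigma> U \<and> context_free_lang \<Sigma> V) \<and>
      L = (\<Union>(U, V) \<in> set ps. lang_conc U (omega_pow V))}"

section \<open>Quantum automata with disturbing runs\<close>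

text \<open>The Hilbert space is C^d (vectors of dimension d), states are complex vectors,
  the inner product <psi|s> is s \<bullet>c psi = sum_i s_i * cnj(psi_i).\<close>

definition unitary_mat :: "nat \<Rightarrow> complex mat \<Rightarrow> bool" where
  "unitary_mat d U \<longleftrightarrow> U \<in> carrier_mat d d \<and>
     mat_adjoint U * U = 1\<^sub>m d \<and> U * mat_adjoint U = 1\<^sub>m d"

definition unit_vec_in :: "nat \<Rightarrow> complex vec \<Rightarrow> bool" where
  "unit_vec_in d v \<longleftrightarrow> v \<in> carrier_vec d \<and> v \<bullet>c v = 1"

definition is_subspace :: "nat \<Rightarrow> complex vec set \<Rightarrow> bool" where
  "is_subspace d F \<longleftrightarrow> F \<subseteq> carrier_vec d \<and> 0\<^sub>v d \<in> F \<and>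
     (\<forall>x\<in>F. \<forall>y\<in>F. x + y \<in> F) \<and> (\<forall>c. \<forall>x\<in>F. c \<cdot>\<^sub>v x \<in> F)"

text \<open>A quantum automaton (C^d, s0, Sigma, {U_sigma}, F).\<close>
definition quantum_automaton ::
  "nat \<Rightarrow> complex vec \<Rightarrow> nat set \<Rightarrow> (nat \<Rightarrow> complex mat) \<Rightarrow> complex vec set \<Rightarrow> bool" where
  "quantum_automaton d s0 \<Sigma> U F \<longleftrightarrow> d > 0 \<and> unit_vec_in d s0 \<and> finite \<Sigma> \<and> \<Sigma> \<noteq> {} \<and>
     (\<forall>a\<in>\<Sigma>. unitary_mat d (U a)) \<and> is_subspace d F"

text \<open>Disturbing run with reset vector psi and checkpoints N 0 < N 1 < ...
  (N i is the checkpoint n_(i+1) of the paper): s_0 = s0 and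
  s_(n+1) = U_(sigma_(n+1)) psi if n is a checkpoint, else U_(sigma_(n+1)) s_n,
  where sigma_(n+1) = w n.\<close>
fun disturbing_run ::
  "(nat \<Rightarrow> complex mat) \<Rightarrow> complex vec \<Rightarrow> complex vec \<Rightarrow> (nat \<Rightarrow> nat) \<Rightarrow> nat word \<Rightarrow> nat \<Rightarrow> complex vec" where
  "disturbing_run U s0 \<psi> N w 0 = s0"
| "disturbing_run U s0 \<psi> N w (Suc n) =
     U (w n) *\<^sub>v (if n \<in> range N then \<psi> else disturbing_run U s0 \<psi> N w n)"

definition checkpoints :: "(nat \<Rightarrow> nat) \<Rightarrow> bool" where
  "checkpoints N \<longleftrightarrow> strict_mono N"

text \<open>inf_i |<psi|s_(n_i)>|^2 for given psi and checkpoints.\<close>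
definition run_value ::
  "(nat \<Rightarrow> complex mat) \<Rightarrow> complex vec \<Rightarrow> complex vec \<Rightarrow> (nat \<Rightarrow> nat) \<Rightarrow> nat word \<Rightarrow> real" where
  "run_value U s0 \<psi> N w = (INF i. (cmod (disturbing_run U s0 \<psi> N w (N i) \<bullet>c \<psi>))\<^sup>2)"

text \<open>f^D(w) = sup over unit psi in F and checkpoint sequences of run_value
  (with the convention sup of the empty set = 0, relevant only when F = {0}).\<close>
definition fD ::
  "nat \<Rightarrow> complex vec \<Rightarrow> (nat \<Rightarrow> complex mat) \<Rightarrow> complex vec set \<Rightarrow> nat word \<Rightarrow> real" where
  "fD d s0 U F w =
     (let S = {run_value U s0 \<psi> N w | \<psi> N. \<psi> \<in> F \<and> unit_vec_in d \<psi> \<and> checkpoints N}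
      in if S = {} then 0 else Sup S)"

definition lang_gt ::
  "nat \<Rightarrow> complex vec \<Rightarrow> nat set \<Rightarrow> (nat \<Rightarrow> complex mat) \<Rightarrow> complex vec set \<Rightarrow> real \<Rightarrow> nat word set" where
  "lang_gt d s0 \<Sigma> U F lam = {w. range w \<subseteq> \<Sigma> \<and> fD d s0 U F w > lam}"

definition lang_eq1 ::
  "nat \<Rightarrow> complex vec \<Rightarrow> nat set \<Rightarrow> (nat \<Rightarrow> complex mat) \<Rightarrow> complex vec set \<Rightarrow> nat word set" where
  "lang_eq1 d s0 \<Sigma> U F = {w. range w \<subseteq> \<Sigma> \<and> fD d s0 U F w = 1}"

definition QBA_D_gt :: "real \<Rightarrow> nat word set set" where
  "QBA_D_gt lam = {L. \<exists>d s0 \<Sigma> U F. quantum_automaton d s0 \<Sigma> U F \<and> L = lang_gt d s0 \<Sigma> U F lam}"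

definition QBA_D_eq1 :: "nat word set set" where
  "QBA_D_eq1 = {L. \<exists>d s0 \<Sigma> U F. quantum_automaton d s0 \<Sigma> U F \<and> L = lang_eq1 d s0 \<Sigma> U F}"

end

theory Submission
  imports Defs
begin
lemma adj_entry: "U \<in> carrier_mat d d \<Longrightarrow> l < d \<Longrightarrow> i < d \<Longrightarrow> mat_adjoint U $$ (l,i) = cnj (U $$ (i,l))"
  unfolding mat_adjoint_def by (simp add: mat_of_rows_def)

lemma unitary_cprod:
  assumes U: "unitary_mat d U" and x: "x \<in> carrier_vec d" and y: "y \<in> carrier_vec d"
  shows "(U *\<^sub>v x) \<bullet>c (U *\<^sub>v y) = x \<bullet>c y"
proof -
  have Uc: "U \<in> carrier_mat d d" using U unfolding unitary_mat_def by auto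
  have del: "(\<Sum>i<d. cnj (U $$ (i,l)) * U $$ (i,k)) = (if l = k then 1 else 0)" if "l < d" "k < d" for l k
  proof -
    have "(mat_adjoint U * U) $$ (l,k) = (1\<^sub>m d) $$ (l,k)" using U unfolding unitary_mat_def by simp
    moreover have "(mat_adjoint U * U) $$ (l,k) = (\<Sum>i<d. cnj (U $$ (i,l)) * U $$ (i,k))"
      using that Uc by (simp add: scalar_prod_def adj_entry mat_adjoint_def mat_of_rows_def lessThan_atLeast0)
    ultimately show ?thesis using that by simp
  qed
  have "(U *\<^sub>v x) \<bullet>c (U *\<^sub>v y) = (\<Sum>i<d. (\<Sum>k<d. U $$ (i,k) * x $ k) * cnj (\<Sum>l<d. U $$ (i,l) * y $ l))"
    using Uc x y by (simp add: scalar_prod_def lessThan_atLeast0)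
  also have "\<dots> = (\<Sum>i<d. \<Sum>k<d. \<Sum>l<d. x $ k * cnj (y $ l) * (cnj (U $$ (i,l)) * U $$ (i,k)))"
    by (simp add: sum_distrib_left sum_distrib_right mult_ac) (rule sum.cong[OF refl], rule sum.swap)
  also have "\<dots> = (\<Sum>k<d. \<Sum>l<d. x $ k * cnj (y $ l) * (\<Sum>i<d. cnj (U $$ (i,l)) * U $$ (i,k)))"
    by (simp add: sum_distrib_left, subst sum.swap, rule sum.cong, simp, subst sum.swap, simp)
  also have "\<dots> = (\<Sum>k<d. \<Sum>l<d. x $ k * cnj (y $ l) * (if l = k then 1 else 0))"
    by (simp add: del)
  also have "\<dots> = x \<bullet>c y" using x y by (simp add: scalar_prod_def lessThan_atLeast0 if_distrib cong: if_cong)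
  finally show ?thesis .
qed

lemma floor_close:
  fixes x y :: real assumes K: "K > 0" and e: "\<lfloor>x * K\<rfloor> = \<lfloor>y * K\<rfloor>"
  shows "\<bar>x - y\<bar> < 1 / K"
proof -
  have "\<bar>x * K - y * K\<bar> < 1"
    using e floor_correct[of "x*K"] floor_correct[of "y*K"] by linarith
  then have "\<bar>x - y\<bar> * K < 1" using K by (simp add: abs_mult left_diff_distrib[symmetric])
  then show ?thesis using K by (simp add: field_simps)
qed

lemma unit_entry_le:
  assumes "unit_vec_in d a" "i < d"
  shows "cmod (a $ i) \<le> 1"
proof -
  have ac: "a \<in> carrier_vec d" and one: "a \<bullet>c a = 1" using assms unfolding unit_vec_in_def by auto
  have "a \<bullet>c a = (\<Sum>k<d. complex_of_real ((cmod (a $ k))\<^sup>2))"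
    using ac by (simp add: scalar_prod_def lessThan_atLeast0 complex_norm_square del: of_real_power)
  then have s: "(\<Sum>k<d. (cmod (a $ k))\<^sup>2) = 1" using one
    by (metis of_real_eq_1_iff of_real_sum)
  have "(cmod (a $ i))\<^sup>2 \<le> (\<Sum>k<d. (cmod (a $ k))\<^sup>2)"
    using assms(2) by (intro member_le_sum) auto
  then have "(cmod (a $ i))\<^sup>2 \<le> 1" using s by simp
  then show ?thesis by (simp add: power_le_one_iff abs_le_square_iff)
qed

lemma unitary_unit:
  assumes "unitary_mat d V" "unit_vec_in d x"
  shows "unit_vec_in d (V *\<^sub>v x)"
  using assms unitary_cprod[of d V x x] unfolding unit_vec_in_def unitary_mat_def by auto

lemma funpow_unit:
  assumes "unitary_mat d V" "unit_vec_in d x"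
  shows "unit_vec_in d (((\<lambda>v. V *\<^sub>v v) ^^ j) x)"
  by (induction j) (auto simp: assms unitary_unit)

lemma funpow_cprod:
  assumes "unitary_mat d V" "x \<in> carrier_vec d" "y \<in> carrier_vec d"
  shows "((\<lambda>v. V *\<^sub>v v) ^^ j) x \<bullet>c ((\<lambda>v. V *\<^sub>v v) ^^ j) y = x \<bullet>c y
     \<and> ((\<lambda>v. V *\<^sub>v v) ^^ j) x \<in> carrier_vec d \<and> ((\<lambda>v. V *\<^sub>v v) ^^ j) y \<in> carrier_vec d"
proof (induction j)
  case 0 then show ?case using assms by simp
next
  case (Suc j)
  have Vc: "V \<in> carrier_mat d d" using assms unfolding unitary_mat_def by auto
  show ?case using Suc unitary_cprod[OF assms(1)] Vc by auto
qed

lemma recurrence: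
  assumes V: "unitary_mat d V" and psi: "unit_vec_in d \<psi>" and lam: "0 \<le> lam" "lam < 1"
  shows "\<exists>m\<ge>1. (cmod (((\<lambda>v. V *\<^sub>v v) ^^ m) \<psi> \<bullet>c \<psi>))\<^sup>2 > lam"
proof -
  define f where "f = (\<lambda>v. V *\<^sub>v v)"
  define a where "a j = (f ^^ j) \<psi>" for j
  have au: "unit_vec_in d (a j)" for j unfolding a_def f_def using funpow_unit[OF V psi] .
  have ac: "a j \<in> carrier_vec d" for j using au unfolding unit_vec_in_def by auto
  define K :: nat where "K = nat \<lceil>4 * d / (1 - lam)\<rceil> + 1"
  have Kpos: "real K > 0" unfolding K_def by simp
  have Kbig: "real K > 4 * d / (1 - lam)" unfolding K_def by linarith
  define cell where "cell j = map (\<lambda>i. (\<lfloor>Re (a j $ i) * K\<rfloor>, \<lfloor>Im (a j $ i) * K\<rfloor>)) [0..<d]" for j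
  define B where "B = {-int K..int K} \<times> {-int K..int K}"
  have "range cell \<subseteq> {xs. set xs \<subseteq> B \<and> length xs = d}"
  proof safe
    fix j
    show "length (cell j) = d" unfolding cell_def by simp
    fix z assume "z \<in> set (cell j)"
    then obtain i where i: "i < d" and z: "z = (\<lfloor>Re (a j $ i) * K\<rfloor>, \<lfloor>Im (a j $ i) * K\<rfloor>)"
      unfolding cell_def by auto
    have c1: "cmod (a j $ i) \<le> 1" using unit_entry_le[OF au i] .
    have r: "\<bar>Re (a j $ i)\<bar> \<le> 1" "\<bar>Im (a j $ i)\<bar> \<le> 1"
      using c1 abs_Re_le_cmod abs_Im_le_cmod order_trans by blast+
    have "\<bar>Re (a j $ i) * K\<bar> \<le> K" "\<bar>Im (a j $ i) * K\<bar> \<le> K"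
      using r Kpos by (simp_all add: abs_mult mult_le_cancel_right1)
    then show "z \<in> B" unfolding z B_def
      by (auto simp: abs_le_iff) (linarith | (simp add: floor_le_iff le_floor_iff))+
  qed
  moreover have "finite {xs. set xs \<subseteq> B \<and> length xs = d}"
    by (rule finite_lists_length_eq) (simp add: B_def)
  ultimately have "finite (range cell)" by (rule finite_subset)
  then have "\<not> inj cell" using finite_imageD infinite_UNIV_nat by blast
  then obtain j j' where jj: "j \<noteq> j'" "cell j = cell j'" unfolding inj_def by blast
  then obtain j1 j2 where j12: "j1 < j2" "cell j1 = cell j2"
    by (metis linorder_neqE_nat)
  define m where "m = j2 - j1"
  have m1: "m \<ge> 1" using j12 unfolding m_def by simp
  have a2: "a j2 = (f ^^ j1) (a m)" unfolding a_def m_def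
    using j12 by (metis funpow_add le_add_diff_inverse less_imp_le o_apply)
  have pres: "a j2 \<bullet>c a j1 = a m \<bullet>c \<psi>"
  proof -
    have "a j2 \<bullet>c a j1 = (f ^^ j1) (a m) \<bullet>c (f ^^ j1) \<psi>" by (simp add: a2 a_def[of j1])
    also have "\<dots> = a m \<bullet>c \<psi>"
      using funpow_cprod[OF V ac[of m], of \<psi> j1] psi unfolding unit_vec_in_def f_def by auto
    finally show ?thesis .
  qed
  have close: "cmod (a j2 $ i - a j1 $ i) \<le> 2 / K" if i: "i < d" for i
  proof -
    have "cell j1 ! i = cell j2 ! i" using j12 by simp
    then have e: "\<lfloor>Re (a j1 $ i) * K\<rfloor> = \<lfloor>Re (a j2 $ i) * K\<rfloor>" "\<lfloor>Im (a j1 $ i) * K\<rfloor> = \<lfloor>Im (a j2 $ i) * K\<rfloor>"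
      using i unfolding cell_def by auto
    have "\<bar>Re (a j2 $ i - a j1 $ i)\<bar> < 1 / K" "\<bar>Im (a j2 $ i - a j1 $ i)\<bar> < 1 / K"
      using floor_close[OF Kpos e(1)] floor_close[OF Kpos e(2)] by (simp_all add: abs_minus_commute)
    then show ?thesis using cmod_le[of "a j2 $ i - a j1 $ i"] by simp
  qed
  have diff: "a j2 \<bullet>c a j1 - a j1 \<bullet>c a j1 = (\<Sum>i<d. (a j2 $ i - a j1 $ i) * cnj (a j1 $ i))"
    using ac[of j1] ac[of j2] by (simp add: scalar_prod_def lessThan_atLeast0 sum_subtractf left_diff_distrib)
  have "cmod (\<Sum>i<d. (a j2 $ i - a j1 $ i) * cnj (a j1 $ i)) \<le> (\<Sum>i<d. cmod ((a j2 $ i - a j1 $ i) * cnj (a j1 $ i)))"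
    by (rule norm_sum)
  also have "\<dots> \<le> (\<Sum>i<d. 2 / K)"
  proof (rule sum_mono)
    fix i assume "i \<in> {..<d}"
    then have i: "i < d" by simp
    have "cmod ((a j2 $ i - a j1 $ i) * cnj (a j1 $ i)) = cmod (a j2 $ i - a j1 $ i) * cmod (a j1 $ i)"
      by (simp add: norm_mult)
    also have "\<dots> \<le> 2 / K * 1"
      using close[OF i] unit_entry_le[OF au i] by (intro mult_mono) auto
    finally show "cmod ((a j2 $ i - a j1 $ i) * cnj (a j1 $ i)) \<le> 2 / K" by simp
  qed
  finally have err: "cmod (a j2 \<bullet>c a j1 - 1) \<le> 2 * d / K"
    using diff au[of j1] unfolding unit_vec_in_def by (simp add: mult.commute)
  define \<delta> where "\<delta> = 2 * d / K"
  have dlt: "2 * \<delta> < 1 - lam" using Kbig Kpos lam unfolding \<delta>_def by (simp add: field_simps)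
  have "cmod (a j2 \<bullet>c a j1) \<ge> 1 - \<delta>"
    using err norm_triangle_ineq2[of 1 "a j2 \<bullet>c a j1"] unfolding \<delta>_def
    by (simp add: norm_minus_commute)
  moreover have "1 - \<delta> \<ge> 0" using dlt lam by simp
  ultimately have "(cmod (a j2 \<bullet>c a j1))\<^sup>2 \<ge> (1 - \<delta>)\<^sup>2" by (simp add: power_mono)
  moreover have "(1 - \<delta>)\<^sup>2 \<ge> 1 - 2 * \<delta>" by (simp add: power2_eq_square algebra_simps)
  ultimately have "(cmod (a m \<bullet>c \<psi>))\<^sup>2 > lam" using dlt pres by simp
  then show ?thesis using m1 unfolding a_def f_def by blast
qed

lemma run_agree:
  assumes "\<forall>t<n. w t = w' t" "\<forall>t<n. t \<notin> range N" "\<forall>t<n. t \<notin> range N'"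
  shows "disturbing_run U s0 \<psi> N w n = disturbing_run U s0 \<psi> N' w' n"
  using assms by (induction n) auto

lemma run_const:
  assumes "a \<in> range N" "\<forall>t. a < t \<and> t \<le> a + k \<longrightarrow> t \<notin> range N"
    "\<forall>t. a \<le> t \<and> t \<le> a + k \<longrightarrow> w t = c"
  shows "disturbing_run U s0 \<psi> N w (Suc (a + k)) = ((\<lambda>v. U c *\<^sub>v v) ^^ (Suc k)) \<psi>"
  using assms
proof (induction k)
  case 0 then show ?case by simp
next
  case (Suc k)
  have "a + Suc k \<notin> range N" using Suc.prems by auto
  moreover have "w (a + Suc k) = c" using Suc.prems by auto
  ultimately show ?case using Suc by auto
qed

lemma run_unit:
  assumes "unit_vec_in d s0" "unit_vec_in d \<psi>" "\<forall>t. unitary_mat d (U (w t))"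
  shows "unit_vec_in d (disturbing_run U s0 \<psi> N w n)"
  using assms by (induction n) (auto intro: unitary_unit)

lemma cprod_bound:
  assumes "unit_vec_in d s" "unit_vec_in d \<psi>"
  shows "cmod (s \<bullet>c \<psi>) \<le> d"
proof -
  have "s \<bullet>c \<psi> = (\<Sum>i<d. s $ i * cnj (\<psi> $ i))"
  proof -
    have "dim_vec \<psi> = d" using assms unfolding unit_vec_in_def by auto
    then show ?thesis by (simp add: scalar_prod_def lessThan_atLeast0)
  qed
  then have "cmod (s \<bullet>c \<psi>) \<le> (\<Sum>i<d. cmod (s $ i * cnj (\<psi> $ i)))" by (simp add: norm_sum)
  also have "\<dots> \<le> (\<Sum>i<d. 1)"
  proof (rule sum_mono)
    fix i assume "i \<in> {..<d}"
    then show "cmod (s $ i * cnj (\<psi> $ i)) \<le> 1"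
      using unit_entry_le[OF assms(1)] unit_entry_le[OF assms(2)]
      by (simp add: norm_mult mult_le_one)
  qed
  finally show ?thesis by simp
qed

lemma run_value_le_first:
  "run_value U s0 \<psi> N w \<le> (cmod (disturbing_run U s0 \<psi> N w (N 0) \<bullet>c \<psi>))\<^sup>2"
  unfolding run_value_def by (rule cINF_lower) (auto intro: bdd_belowI[of _ 0])

lemma run_value_bound:
  assumes "unit_vec_in d s0" "unit_vec_in d \<psi>" "\<forall>t. unitary_mat d (U (w t))"
  shows "run_value U s0 \<psi> N w \<le> (real d)\<^sup>2"
proof -
  have "cmod (disturbing_run U s0 \<psi> N w (N 0) \<bullet>c \<psi>) \<le> d"
    using cprod_bound[OF run_unit[of d s0 \<psi> U w N "N 0", OF assms] assms(2)] .
  then have "(cmod (disturbing_run U s0 \<psi> N w (N 0) \<bullet>c \<psi>))\<^sup>2 \<le> (real d)\<^sup>2"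
    by (simp add: power_mono)
  then show ?thesis using run_value_le_first order_trans by blast
qed

lemma fD_bdd:
  assumes QA: "quantum_automaton d s0 \<Sigma> U F" and w: "range w \<subseteq> \<Sigma>"
  shows "bdd_above {run_value U s0 \<psi> N w | \<psi> N. \<psi> \<in> F \<and> unit_vec_in d \<psi> \<and> checkpoints N}"
proof -
  have "\<forall>t. unitary_mat d (U (w t))" using QA w unfolding quantum_automaton_def by auto
  moreover have "unit_vec_in d s0" using QA unfolding quantum_automaton_def by auto
  ultimately show ?thesis
    by (intro bdd_aboveI[of _ "(real d)\<^sup>2"]) (auto intro: run_value_bound)
qed

lemma fD_ge:
  assumes QA: "quantum_automaton d s0 \<Sigma> U F" and w: "range w \<subseteq> \<Sigma>"
    and "\<psi> \<in> F" "unit_vec_in d \<psi>" "checkpoints N"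
  shows "run_value U s0 \<psi> N w \<le> fD d s0 U F w"
proof -
  let ?S = "{run_value U s0 \<psi> N w | \<psi> N. \<psi> \<in> F \<and> unit_vec_in d \<psi> \<and> checkpoints N}"
  have m: "run_value U s0 \<psi> N w \<in> ?S" using assms by blast
  then have ne: "?S \<noteq> {}" by blast
  have "fD d s0 U F w = Sup ?S" unfolding fD_def Let_def by (rule if_not_P[OF ne])
  then show ?thesis using cSup_upper[OF m fD_bdd[OF QA w]] by simp
qed

lemma fD_gtE:
  assumes QA: "quantum_automaton d s0 \<Sigma> U F" and w: "range w \<subseteq> \<Sigma>" and lam: "0 \<le> lam"
    and gt: "fD d s0 U F w > lam"
  obtains \<psi> N where "\<psi> \<in> F" "unit_vec_in d \<psi>" "checkpoints N" "run_value U s0 \<psi> N w > lam"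
proof -
  let ?S = "{run_value U s0 \<psi> N w | \<psi> N. \<psi> \<in> F \<and> unit_vec_in d \<psi> \<and> checkpoints N}"
  have ne: "?S \<noteq> {}"
  proof
    assume "?S = {}"
    then have "fD d s0 U F w = 0" unfolding fD_def Let_def by simp
    then show False using gt lam by simp
  qed
  have "fD d s0 U F w = Sup ?S" unfolding fD_def Let_def by (rule if_not_P[OF ne])
  then have "lam < Sup ?S" using gt by simp
  then obtain x where "x \<in> ?S" "lam < x" using less_cSup_iff[OF ne fD_bdd[OF QA w]] by blast
  then show ?thesis using that by blast
qed

lemma not_QBA_gt:
  assumes lam: "0 \<le> lam" "lam < 1"
    and z0: "(\<lambda>_. 0::nat) \<in> L" and z1: "w1 \<in> L" "w1 j = 1"
    and notin: "\<forall>k. (\<lambda>t. if t < k then 0 else 1::nat) \<notin> L"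
  shows "L \<notin> QBA_D_gt lam"
proof
  assume "L \<in> QBA_D_gt lam"
  then obtain d s0 \<Sigma> U F where QA: "quantum_automaton d s0 \<Sigma> U F" and L: "L = lang_gt d s0 \<Sigma> U F lam"
    unfolding QBA_D_gt_def by blast
  have r0: "range (\<lambda>_. 0::nat) \<subseteq> \<Sigma>" and g0: "fD d s0 U F (\<lambda>_. 0) > lam"
    using z0 unfolding L lang_gt_def by auto
  have "range w1 \<subseteq> \<Sigma>" using z1 unfolding L lang_gt_def by auto
  then have in1: "1 \<in> \<Sigma>" using z1(2) by (metis rangeI subsetD)
  have in0: "0 \<in> \<Sigma>" using r0 by auto
  obtain \<psi> N where psi: "\<psi> \<in> F" "unit_vec_in d \<psi>" and N: "checkpoints N"
    and rv: "run_value U s0 \<psi> N (\<lambda>_. 0) > lam"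
    using fD_gtE[OF QA r0 lam(1) g0] by blast
  define k where "k = N 0"
  define w' where "w' = (\<lambda>t. if t < k then 0 else 1::nat)"
  have first: "(cmod (disturbing_run U s0 \<psi> N (\<lambda>_. 0) k \<bullet>c \<psi>))\<^sup>2 > lam"
    using rv run_value_le_first[of U s0 \<psi> N "\<lambda>_. 0"] unfolding k_def by simp
  have V: "unitary_mat d (U 1)" using QA in1 unfolding quantum_automaton_def by auto
  obtain m where m: "m \<ge> 1" and mv: "(cmod (((\<lambda>v. U 1 *\<^sub>v v) ^^ m) \<psi> \<bullet>c \<psi>))\<^sup>2 > lam"
    using recurrence[OF V psi(2) lam] by blast
  define N' where "N' i = k + i * m" for i
  have N'sm: "checkpoints N'" unfolding checkpoints_def N'_def strict_mono_def using m by simp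
  have Nge: "N i \<ge> k" for i using N unfolding checkpoints_def k_def
    by (simp add: strict_mono_less_eq)
  have a0': "disturbing_run U s0 \<psi> N' w' k = disturbing_run U s0 \<psi> N (\<lambda>_. 0) k"
  proof (rule run_agree)
    show "\<forall>t<k. w' t = 0" unfolding w'_def by simp
    show "\<forall>t<k. t \<notin> range N'" unfolding N'_def by auto
    show "\<forall>t<k. t \<notin> range N" using Nge by (auto simp: not_le[symmetric])
  qed
  have a0: "disturbing_run U s0 \<psi> N' w' (N' 0) = disturbing_run U s0 \<psi> N (\<lambda>_. 0) k"
    using a0' by (simp add: N'_def)
  have aS: "disturbing_run U s0 \<psi> N' w' (N' (Suc i)) = ((\<lambda>v. U 1 *\<^sub>v v) ^^ m) \<psi>" for i
  proof -
    obtain m' where m': "m = Suc m'" using m by (cases m) auto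
    have "N' (Suc i) = Suc (N' i + m')" unfolding N'_def m' by simp
    moreover have "disturbing_run U s0 \<psi> N' w' (Suc (N' i + m')) = ((\<lambda>v. U 1 *\<^sub>v v) ^^ (Suc m')) \<psi>"
    proof (rule run_const)
      show "N' i \<in> range N'" by simp
      show "\<forall>t. N' i < t \<and> t \<le> N' i + m' \<longrightarrow> t \<notin> range N'"
      proof (intro allI impI notI)
        fix t assume t: "N' i < t \<and> t \<le> N' i + m'" "t \<in> range N'"
        then obtain j where j: "t = N' j" by auto
        then have "i * m < j * m" "j * m < Suc i * m" using t unfolding N'_def m' by auto
        then have "i < j" "j < Suc i" using mult_less_cancel2 by blast+
        then show False by simp
      qed
      show "\<forall>t. N' i \<le> t \<and> t \<le> N' i + m' \<longrightarrow> w' t = 1"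
        unfolding w'_def N'_def by auto
    qed
    ultimately show ?thesis using m' by simp
  qed
  have "run_value U s0 \<psi> N' w' > lam"
  proof -
    let ?x0 = "(cmod (disturbing_run U s0 \<psi> N (\<lambda>_. 0) k \<bullet>c \<psi>))\<^sup>2"
    let ?xm = "(cmod (((\<lambda>v. U 1 *\<^sub>v v) ^^ m) \<psi> \<bullet>c \<psi>))\<^sup>2"
    have "min ?x0 ?xm \<le> run_value U s0 \<psi> N' w'"
      unfolding run_value_def
    proof (rule cINF_greatest)
      fix i show "min ?x0 ?xm \<le> (cmod (disturbing_run U s0 \<psi> N' w' (N' i) \<bullet>c \<psi>))\<^sup>2"
        by (cases i) (simp_all add: a0 aS)
    qed simp
    then show ?thesis using first mv by simp
  qed
  moreover have rw': "range w' \<subseteq> \<Sigma>" using in0 in1 unfolding w'_def by auto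
  ultimately have "fD d s0 U F w' > lam"
    using fD_ge[OF QA rw' psi N'sm] by simp
  then have "w' \<in> L" unfolding L lang_gt_def using rw' by simp
  then show False using notin unfolding w'_def by blast
qed

lemma inf_concat_first:
  assumes "is_inf_concat v x" "t < length (v 0)"
  shows "x t = v 0 ! t"
proof -
  have "prefix (length (v 0)) x = v 0"
  proof -
    have "prefix (\<Sum>i<Suc 0. length (v i)) x = concat (map v [0..<Suc 0])"
      using assms(1) unfolding is_inf_concat_def by blast
    then show ?thesis by simp
  qed
  then show ?thesis using assms(2) by (metis subsequence_nth add_0 diff_zero)
qed

lemma inf_concat_shift:
  assumes "is_inf_concat v x"
  shows "is_inf_concat (case_nat u v) (u \<frown> x)"
  unfolding is_inf_concat_def
proof
  fix k
  show "prefix (\<Sum>i<k. length (case_nat u v i)) (u \<frown> x) = concat (map (case_nat u v) [0..<k])"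
  proof (cases k)
    case 0 then show ?thesis by simp
  next
    case (Suc k')
    have s: "(\<Sum>i<k. length (case_nat u v i)) = length u + (\<Sum>i<k'. length (v i))"
      unfolding Suc by (subst sum.lessThan_Suc_shift) simp
    have c: "concat (map (case_nat u v) [0..<k]) = u @ concat (map v [0..<k'])"
      unfolding Suc by (simp add: upt_conv_Cons map_Suc_upt[symmetric] comp_def del: upt_Suc)
    show ?thesis unfolding s c using assms unfolding is_inf_concat_def by simp
  qed
qed

lemma inf_concat_tail:
  assumes "is_inf_concat v x"
  shows "is_inf_concat (\<lambda>i. v (Suc i)) (suffix (length (v 0)) x)"
  unfolding is_inf_concat_def
proof
  fix k
  define l where "l = length (v 0)"
  define S where "S = (\<Sum>i<k. length (v (Suc i)))"
  have s: "(\<Sum>i<Suc k. length (v i)) = l + S"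
    unfolding l_def S_def by (subst sum.lessThan_Suc_shift) simp
  have c: "concat (map v [0..<Suc k]) = v 0 @ concat (map (\<lambda>i. v (Suc i)) [0..<k])"
    by (simp add: upt_conv_Cons map_Suc_upt[symmetric] comp_def del: upt_Suc)
  have "prefix (l + S) x = v 0 @ concat (map (\<lambda>i. v (Suc i)) [0..<k])"
    using assms unfolding is_inf_concat_def by (metis s c)
  moreover have "prefix (l + S) x = prefix l x @ x [l \<rightarrow> l + S]" by (rule subsequence_append)
  moreover have "prefix l x = v 0"
  proof -
    have "prefix (\<Sum>i<Suc 0. length (v i)) x = concat (map v [0..<Suc 0])"
      using assms unfolding is_inf_concat_def by blast
    then show ?thesis unfolding l_def by simp
  qed
  ultimately have "x [l \<rightarrow> l + S] = concat (map (\<lambda>i. v (Suc i)) [0..<k])" by simp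
  moreover have "prefix S (suffix l x) = x [l \<rightarrow> l + S]"
    using subsequence_prefix_suffix[where i=l and j="l + S" and w=x] by simp
  ultimately show "prefix (\<Sum>i<k. length (v (Suc i))) (suffix (length (v 0)) x) =
      concat (map (\<lambda>i. v (Suc i)) [0..<k])" unfolding S_def l_def by simp
qed

lemma nfa_pump:
  assumes acc: "nfa_accepts Q q0 \<delta> Fin u" and d: "\<delta> \<subseteq> Q \<times> \<Sigma> \<times> Q" and fin: "finite Q"
    and K: "card Q \<le> K" "K < length u"
  shows "\<exists>i j. i < j \<and> j \<le> K \<and> nfa_accepts Q q0 \<delta> Fin (take j u @ drop i u)"
proof -
  obtain qs where qs: "length qs = Suc (length u)" "qs ! 0 = q0"
    "\<forall>t<length u. (qs ! t, u ! t, qs ! Suc t) \<in> \<delta>" "last qs \<in> Fin"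
    using acc unfolding nfa_accepts_def by blast
  have inQ: "qs ! t \<in> Q" if "t < length u" for t using qs(3) d that by blast
  have "\<not> inj_on (\<lambda>t. qs ! t) {0..K}"
  proof
    assume "inj_on (\<lambda>t. qs ! t) {0..K}"
    moreover have "(\<lambda>t. qs ! t) ` {0..K} \<subseteq> Q" using inQ K by auto
    ultimately have "card {0..K} \<le> card Q" using card_inj_on_le fin by blast
    then show False using K by simp
  qed
  then obtain t1 t2 where t: "t1 \<le> K" "t2 \<le> K" "t1 \<noteq> t2" "qs ! t1 = qs ! t2"
    unfolding inj_on_def by auto
  then obtain i j where ij: "i < j" "j \<le> K" "qs ! i = qs ! j"
    by (metis linorder_neqE_nat)
  define u' where "u' = take j u @ drop i u"
  define qs' where "qs' = take j qs @ drop i qs"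
  have lu': "length u' = j + (length u - i)" unfolding u'_def using ij K by simp
  have lq': "length qs' = Suc (length u')" unfolding qs'_def lu' using ij K qs by simp
  have q0': "qs' ! 0 = q0" unfolding qs'_def using ij K qs by (simp add: nth_append)
  have last': "last qs' \<in> Fin" unfolding qs'_def using ij K qs
    by (simp add: last_append last_drop)
  have qs'_nth: "qs' ! t = (if t < j then qs ! t else qs ! (i + t - j))" if "t \<le> length u'" for t
    using that ij K qs unfolding qs'_def lu' by (auto simp: nth_append)
  have u'_nth: "u' ! t = (if t < j then u ! t else u ! (i + t - j))" if "t < length u'" for t
    using that ij K unfolding u'_def lu' by (auto simp: nth_append)
  have tr: "(qs' ! t, u' ! t, qs' ! Suc t) \<in> \<delta>" if tl: "t < length u'" for t
  proof (cases "t < j")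
    case True
    have "qs' ! Suc t = qs ! Suc t"
    proof (cases "Suc t < j")
      case True then show ?thesis using qs'_nth[of "Suc t"] tl by simp
    next
      case False
      then have "Suc t = j" using \<open>t < j\<close> by simp
      then show ?thesis using qs'_nth[of "Suc t"] tl ij by simp
    qed
    then show ?thesis using True qs'_nth[of t] u'_nth[OF tl] tl qs(3) ij K by simp
  next
    case False
    have "i + t - j < length u" using tl False lu' ij by simp
    moreover have "i + Suc t - j = Suc (i + t - j)" using False by simp
    ultimately show ?thesis using False qs'_nth[of t] qs'_nth[of "Suc t"] u'_nth[OF tl] tl qs(3)
      by simp
  qed
  have "nfa_accepts Q q0 \<delta> Fin u'"
    unfolding nfa_accepts_def using lq' q0' last' tr by blast
  then show ?thesis using ij unfolding u'_def by blast
qed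

definition ww :: "nat \<Rightarrow> nat \<Rightarrow> nat \<Rightarrow> nat \<Rightarrow> nat \<Rightarrow> nat word" where
  "ww a b c n p = (\<lambda>t. if t < n + p then a else if t < 2 * n + p then b else c)"

lemma ww_crit:
  assumes J: "J \<le> n" and A: "\<forall>t < J + p. W t = a" and B: "\<forall>t \<ge> J. W (t + p) = ww a b c n 0 t"
  shows "W = ww a b c n p"
proof
  fix t
  show "W t = ww a b c n p t"
  proof (cases "t < J + p")
    case True then show ?thesis using A J unfolding ww_def by simp
  next
    case False
    define s where "s = t - p"
    have s: "t = s + p" "s \<ge> J" using False unfolding s_def by auto
    have "W (s + p) = ww a b c n 0 s" using B s(2) by blast
    then show ?thesis unfolding s(1) ww_def by simp
  qed
qed

definition nfa_bounded :: "nat set \<Rightarrow> nat \<Rightarrow> nat list set \<Rightarrow> bool" where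
  "nfa_bounded \<Sigma> K U \<longleftrightarrow> (\<exists>Q q0 \<delta> Fin. finite Q \<and> card Q \<le> K \<and> \<delta> \<subseteq> Q \<times> \<Sigma> \<times> Q \<and>
        U = {w. set w \<subseteq> \<Sigma> \<and> nfa_accepts Q q0 \<delta> Fin w})"

lemma nfa_bounded_mono: "nfa_bounded \<Sigma> K U \<Longrightarrow> K \<le> K' \<Longrightarrow> nfa_bounded \<Sigma> K' U"
  unfolding nfa_bounded_def using le_trans by blast

lemma regular_bounded: "regular_lang \<Sigma> U \<Longrightarrow> \<exists>K. nfa_bounded \<Sigma> K U"
  unfolding regular_lang_def nfa_bounded_def by blast

lemma list_bounded:
  assumes "\<forall>(U, V) \<in> set ps. regular_lang \<Sigma> U \<and> regular_lang \<Sigma> V"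
  shows "\<exists>K. \<forall>(U, V) \<in> set ps. nfa_bounded \<Sigma> K U \<and> nfa_bounded \<Sigma> K V"
  using assms
proof (induction ps)
  case Nil then show ?case by simp
next
  case (Cons x ps)
  obtain U V where x: "x = (U, V)" by fastforce
  obtain K where K: "\<forall>(U, V) \<in> set ps. nfa_bounded \<Sigma> K U \<and> nfa_bounded \<Sigma> K V" using Cons by auto
  have rUV: "regular_lang \<Sigma> U" "regular_lang \<Sigma> V" using Cons.prems x by auto
  obtain K1 where K1: "nfa_bounded \<Sigma> K1 U" using regular_bounded[OF rUV(1)] by blast
  obtain K2 where K2: "nfa_bounded \<Sigma> K2 V" using regular_bounded[OF rUV(2)] by blast
  let ?M = "max K (max K1 K2)"
  have "\<forall>(U, V) \<in> set ps. nfa_bounded \<Sigma> ?M U \<and> nfa_bounded \<Sigma> ?M V"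
    using K nfa_bounded_mono[of \<Sigma> K _ ?M] by auto
  moreover have "nfa_bounded \<Sigma> ?M U" "nfa_bounded \<Sigma> ?M V"
    using K1 K2 nfa_bounded_mono by auto
  ultimately show ?case using x by auto
qed

lemma lang_pump:
  assumes "nfa_bounded \<Sigma> K U" "u \<in> U" "K < length u"
  shows "\<exists>i j. i < j \<and> j \<le> K \<and> take j u @ drop i u \<in> U"
proof -
  obtain Q q0 \<delta> Fin where N: "finite Q" "card Q \<le> K" "\<delta> \<subseteq> Q \<times> \<Sigma> \<times> Q"
    "U = {w. set w \<subseteq> \<Sigma> \<and> nfa_accepts Q q0 \<delta> Fin w}" using assms(1) unfolding nfa_bounded_def by blast
  have u: "set u \<subseteq> \<Sigma>" "nfa_accepts Q q0 \<delta> Fin u" using assms(2) N(4) by auto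
  obtain i j where ij: "i < j" "j \<le> K" "nfa_accepts Q q0 \<delta> Fin (take j u @ drop i u)"
    using nfa_pump[OF u(2) N(3) N(1) N(2) assms(3)] by blast
  have "set (take j u @ drop i u) \<subseteq> \<Sigma>" using u(1) set_take_subset set_drop_subset by fastforce
  then show ?thesis using ij N(4) by blast
qed

lemma not_omega_RL:
  assumes yes: "\<forall>n. ww a b c n 0 \<in> L" and no: "\<forall>n p. p > 0 \<longrightarrow> ww a b c n p \<notin> L"
  shows "L \<notin> omega_RL"
proof
  assume "L \<in> omega_RL"
  then obtain \<Sigma> ps where reg: "\<forall>(U, V) \<in> set ps. regular_lang \<Sigma> U \<and> regular_lang \<Sigma> V"
    and L: "L = (\<Union>(U, V) \<in> set ps. lang_conc U (omega_pow V))"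
    unfolding omega_RL_def by blast
  obtain K where K: "\<forall>(U, V) \<in> set ps. nfa_bounded \<Sigma> K U \<and> nfa_bounded \<Sigma> K V"
    using list_bounded[OF reg] by blast
  define n where "n = 2 * K + 1"
  define w where "w = ww a b c n 0"
  have wa: "w t = a" if "t < n" for t using that unfolding w_def ww_def by simp
  have "w \<in> L" using yes unfolding w_def by blast
  then obtain U V where UV: "(U, V) \<in> set ps" and wUV: "w \<in> lang_conc U (omega_pow V)"
    unfolding L by blast
  have bU: "nfa_bounded \<Sigma> K U" and bV: "nfa_bounded \<Sigma> K V" using K UV by auto
  have inL: "y \<in> L" if "y \<in> lang_conc U (omega_pow V)" for y using that UV unfolding L by blast
  obtain u x where ux: "w = u \<frown> x" "u \<in> U" "x \<in> omega_pow V" using wUV unfolding lang_conc_def by blast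
  obtain v where v: "\<forall>i. v i \<in> V \<and> v i \<noteq> []" "is_inf_concat v x"
    using ux(3) unfolding omega_pow_def by blast
  have wu: "u ! t = w t" if "t < length u" for t using that ux(1) by simp
  have wx: "x (t - length u) = w t" if "t \<ge> length u" for t using that ux(1) by simp
  have contra: "False" if "ww a b c n p \<in> L" "p > 0" for p using that no by blast
  show False
  proof (cases "K < length u")
    case True
    obtain i j where ij: "i < j" "j \<le> K" "take j u @ drop i u \<in> U"
      using lang_pump[OF bU ux(2) True] by blast
    define u' where "u' = take j u @ drop i u"
    define p where "p = j - i"
    have lu': "length u' = length u + p" unfolding u'_def p_def using ij True by simp
    have u'n: "u' ! t = (if t < j then u ! t else u ! (i + t - j))" if "t < length u'" for t
      using that ij True unfolding u'_def lu' p_def by (auto simp: nth_append)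
    have "u' \<frown> x \<in> L" using ij(3) ux(3) inL unfolding u'_def lang_conc_def by blast
    moreover have "u' \<frown> x = ww a b c n p"
    proof (rule ww_crit[where J = j])
      show "j \<le> n" using ij unfolding n_def by simp
      show "\<forall>t < j + p. (u' \<frown> x) t = a"
      proof (intro allI impI)
        fix t assume t: "t < j + p"
        have tl: "t < length u'" using t lu' ij True unfolding p_def by simp
        show "(u' \<frown> x) t = a"
        proof (cases "t < j")
          case True
          then show ?thesis using tl u'n[OF tl] wu wa ij \<open>K < length u\<close> unfolding n_def by simp
        next
          case False
          then have "i + t - j < j" using t unfolding p_def by simp
          then show ?thesis using False tl u'n[OF tl] wu wa ij \<open>K < length u\<close> unfolding n_def by simp
        qed
      qed
      show "\<forall>t \<ge> j. (u' \<frown> x) (t + p) = ww a b c n 0 t"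
      proof (intro allI impI)
        fix t assume t: "t \<ge> j"
        show "(u' \<frown> x) (t + p) = ww a b c n 0 t"
        proof (cases "t < length u")
          case True
          then have tl: "t + p < length u'" using lu' by simp
          have "i + (t + p) - j = t" using t ij unfolding p_def by simp
          then show ?thesis using tl u'n[OF tl] t True wu unfolding w_def by simp
        next
          case False
          then show ?thesis using lu' wx[of t] unfolding w_def by simp
        qed
      qed
    qed
    ultimately have "ww a b c n p \<in> L" by simp
    moreover have "p > 0" using ij unfolding p_def by simp
    ultimately show False using contra by blast
  next
    case False
    then have uK: "length u \<le> K" by simp
    define v0 where "v0 = v 0"
    have v0V: "v0 \<in> V" "v0 \<noteq> []" using v(1) unfolding v0_def by auto
    have xv0: "x t = v0 ! t" if "t < length v0" for t using inf_concat_first[OF v(2)] that unfolding v0_def by simp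
    show False
    proof (cases "length v0 \<le> n - length u")
      case True
      define x' where "x' = v0 \<frown> x"
      define p where "p = length v0"
      have "x' \<in> omega_pow V" unfolding omega_pow_def x'_def
        using inf_concat_shift[OF v(2), of v0] v(1) v0V by (auto split: nat.splits intro!: exI[of _ "case_nat v0 v"])
      then have "u \<frown> x' \<in> L" using ux(2) inL unfolding lang_conc_def by blast
      moreover have "u \<frown> x' = ww a b c n p"
      proof (rule ww_crit[where J = "length u"])
        show "length u \<le> n" using uK unfolding n_def by simp
        show "\<forall>t < length u + p. (u \<frown> x') t = a"
        proof (intro allI impI)
          fix t assume t: "t < length u + p"
          show "(u \<frown> x') t = a"
          proof (cases "t < length u")
            case True then show ?thesis using wu wa uK unfolding n_def by simp
          next
            case False
            then have tl: "t - length u < length v0" using t unfolding p_def by simp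
            have e1: "(u \<frown> x') t = x' (t - length u)" using False by simp
            have e2: "x' (t - length u) = v0 ! (t - length u)" unfolding x'_def using tl by simp
            have e3: "v0 ! (t - length u) = x (t - length u)" using xv0 tl by simp
            have e4: "x (t - length u) = w t" using wx False by simp
            have "t < n" using t uK \<open>length v0 \<le> n - length u\<close> unfolding p_def n_def by simp
            then show ?thesis using e1 e2 e3 e4 wa by simp
          qed
        qed
        show "\<forall>t \<ge> length u. (u \<frown> x') (t + p) = ww a b c n 0 t"
          using wx unfolding x'_def p_def w_def by simp
      qed
      ultimately have "ww a b c n p \<in> L" by simp
      moreover have "p > 0" using v0V unfolding p_def by simp
      ultimately show False using contra by blast
    next
      case False
      then have lv0: "K < length v0" unfolding n_def using uK by simp
      obtain i j where ij: "i < j" "j \<le> K" "take j v0 @ drop i v0 \<in> V"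
        using lang_pump[OF bV v0V(1) lv0] by blast
      define v0' where "v0' = take j v0 @ drop i v0"
      define p where "p = j - i"
      define x' where "x' = v0' \<frown> suffix (length v0) x"
      have lv0': "length v0' = length v0 + p" unfolding v0'_def p_def using ij lv0 by simp
      have v0'n: "v0' ! t = (if t < j then v0 ! t else v0 ! (i + t - j))" if "t < length v0'" for t
        using that ij lv0 unfolding v0'_def lv0' p_def by (auto simp: nth_append)
      have v0a: "v0 ! t = a" if "t \<le> K" for t
      proof -
        have "v0 ! t = x t" using xv0 that lv0 by simp
        also have "\<dots> = w (t + length u)" using wx[of "t + length u"] by simp
        also have "\<dots> = a" using wa that uK unfolding n_def by simp
        finally show ?thesis .
      qed
      have "x' \<in> omega_pow V"
      proof -
        have "is_inf_concat (case_nat v0' (\<lambda>i. v (Suc i))) x'"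
          unfolding x'_def using inf_concat_shift[OF inf_concat_tail[OF v(2)]] unfolding v0_def by blast
        moreover have "\<forall>i. case_nat v0' (\<lambda>i. v (Suc i)) i \<in> V \<and> case_nat v0' (\<lambda>i. v (Suc i)) i \<noteq> []"
          using v(1) ij lv0 unfolding v0'_def by (auto split: nat.splits)
        ultimately show ?thesis unfolding omega_pow_def by blast
      qed
      then have "u \<frown> x' \<in> L" using ux(2) inL unfolding lang_conc_def by blast
      moreover have "u \<frown> x' = ww a b c n p"
      proof (rule ww_crit[where J = "length u + j"])
        show "length u + j \<le> n" using uK ij unfolding n_def by simp
        show "\<forall>t < length u + j + p. (u \<frown> x') t = a"
        proof (intro allI impI)
          fix t assume t: "t < length u + j + p"
          show "(u \<frown> x') t = a"
          proof (cases "t < length u")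
            case True then show ?thesis using wu wa uK unfolding n_def by simp
          next
            case False
            define s where "s = t - length u"
            have sl: "s < length v0'" using t False lv0' lv0 ij unfolding s_def by simp
            have "(u \<frown> x') t = v0' ! s" using False sl unfolding x'_def s_def by (simp add: nth_append)
            also have "\<dots> = a"
            proof (cases "s < j")
              case True then show ?thesis using v0'n[OF sl] v0a ij by simp
            next
              case False
              then have "i + s - j < j" using False t ij unfolding s_def p_def by simp
              then show ?thesis using False v0'n[OF sl] v0a ij by simp
            qed
            finally show ?thesis .
          qed
        qed
        show "\<forall>t \<ge> length u + j. (u \<frown> x') (t + p) = ww a b c n 0 t"
        proof (intro allI impI)
          fix t assume t: "t \<ge> length u + j"
          define s where "s = t + p - length u"
          have us: "(u \<frown> x') (t + p) = x' s" using t unfolding s_def by simp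
          have ww0: "ww a b c n 0 t = x (t - length u)" using wx[of t] t unfolding w_def by simp
          show "(u \<frown> x') (t + p) = ww a b c n 0 t"
          proof (cases "s < length v0'")
            case True
            then have "x' s = v0' ! s" unfolding x'_def by simp
            also have "\<dots> = v0 ! (t - length u)"
              using v0'n[OF True] t ij unfolding s_def p_def by simp
            also have "\<dots> = x (t - length u)"
              using xv0 True t lv0' unfolding s_def by simp
            finally show ?thesis using us ww0 by simp
          next
            case False
            then have "x' s = x (length v0 + (s - length v0'))" unfolding x'_def by simp
            also have "length v0 + (s - length v0') = t - length u"
              using False lv0' t unfolding s_def by simp
            finally show ?thesis using us ww0 by simp
          qed
        qed
      qed
      ultimately have "ww a b c n p \<in> L" by simp
    moreover have "p > 0" using ij unfolding p_def by simp
    ultimately show False using contra by blast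
    qed
  qed
qed

definition rot :: "real \<Rightarrow> complex mat" where
  "rot \<phi> = mat 2 2 (\<lambda>(i,j). complex_of_real (if i = j then cos \<phi> else if i = 0 then - sin \<phi> else sin \<phi>))"

lemma sum2: "(\<Sum>i::nat = 0..<2. f i) = f 0 + (f 1 :: 'a :: comm_monoid_add)"
  by (simp add: numeral_2_eq_2)

lemma sum2': "(\<Sum>i::nat <2. f i) = f 0 + (f 1 :: 'a :: comm_monoid_add)"
  by (simp add: numeral_2_eq_2)

lemma rot_carrier[simp]: "rot \<phi> \<in> carrier_mat 2 2" unfolding rot_def by simp

lemma less2: "(i::nat) < 2 \<longleftrightarrow> i = 0 \<or> i = 1" by auto

lemma rot_vec:
  assumes "v \<in> carrier_vec 2"
  shows "rot \<phi> *\<^sub>v v = vec 2 (\<lambda>i. if i = 0 then complex_of_real (cos \<phi>) * v $ 0 - complex_of_real (sin \<phi>) * v $ 1 else complex_of_real (sin \<phi>) * v $ 0 + complex_of_real (cos \<phi>) * v $ 1)"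
  using assms by (intro eq_vecI) (auto simp: rot_def scalar_prod_def sum2 less2 row_def)

lemma rot_rot:
  assumes "v \<in> carrier_vec 2"
  shows "rot a *\<^sub>v (rot b *\<^sub>v v) = rot (a + b) *\<^sub>v v"
proof -
  have c: "rot b *\<^sub>v v \<in> carrier_vec 2" by (rule mult_mat_vec_carrier[OF rot_carrier assms])
  have i0: "(rot b *\<^sub>v v) $ 0 = complex_of_real (cos b) * v $ 0 - complex_of_real (sin b) * v $ 1"
    and i1: "(rot b *\<^sub>v v) $ 1 = complex_of_real (sin b) * v $ 0 + complex_of_real (cos b) * v $ 1"
    by (simp_all add: rot_vec[OF assms])
  show ?thesis
    unfolding rot_vec[OF c, of a] i0 i1 rot_vec[OF assms, of "a+b"]
    by (intro eq_vecI) (auto simp: cos_add sin_add algebra_simps)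
qed

lemma rot_0: "v \<in> carrier_vec 2 \<Longrightarrow> rot 0 *\<^sub>v v = v"
  by (subst rot_vec) (auto intro!: eq_vecI simp: less2)

lemma rot_unitary: "unitary_mat 2 (rot \<phi>)"
proof -
  have "mat_adjoint (rot \<phi>) * rot \<phi> = 1\<^sub>m 2"
    by (intro eq_matI) (auto simp: scalar_prod_def sum2 less2 adj_entry mat_adjoint_def mat_of_rows_def rot_def
        simp flip: of_real_mult of_real_add of_real_power power2_eq_square)
  moreover have "rot \<phi> * mat_adjoint (rot \<phi>) = 1\<^sub>m 2"
    by (intro eq_matI) (auto simp: scalar_prod_def sum2 less2 adj_entry mat_adjoint_def mat_of_rows_def rot_def
        simp flip: of_real_mult of_real_add of_real_power power2_eq_square)
  ultimately show ?thesis unfolding unitary_mat_def by simp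
qed

definition th3 :: real where "th3 = arccos (3/5)"

lemma cos_th3: "cos th3 = 3/5" unfolding th3_def by simp

lemma sin_th3: "sin th3 = 4/5"
proof -
  have "sin th3 = sqrt (1 - (3/5)\<^sup>2)" unfolding th3_def by (rule sin_arccos) auto
  also have "\<dots> = 4/5" by (rule real_sqrt_unique) (auto simp: power2_eq_square)
  finally show ?thesis .
qed

fun XY :: "nat \<Rightarrow> int \<times> int" where
  "XY 0 = (1, 0)"
| "XY (Suc k) = (3 * fst (XY k) - 4 * snd (XY k), 4 * fst (XY k) + 3 * snd (XY k))"

lemma XY_trig: "cos (real k * th3) = fst (XY k) / 5 ^ k \<and> sin (real k * th3) = snd (XY k) / 5 ^ k"
proof (induction k)
  case 0 then show ?case by simp
next
  case (Suc k)
  have e: "real (Suc k) * th3 = real k * th3 + th3" by (simp add: algebra_simps)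
  show ?case unfolding e cos_add sin_add using Suc by (simp add: cos_th3 sin_th3 field_simps)
qed

lemma XY_mod: "k \<ge> 1 \<Longrightarrow> \<exists>a b. XY k = (5 * a + 3, 5 * b + 4)"
proof (induction k)
  case 0 then show ?case by simp
next
  case (Suc k)
  show ?case
  proof (cases "k = 0")
    case True then show ?thesis by (intro exI[of _ 0]) simp
  next
    case False
    then obtain a b where ab: "XY k = (5 * a + 3, 5 * b + 4)" using Suc by auto
    show ?thesis
      by (rule exI[of _ "3 * a - 4 * b - 2"], rule exI[of _ "4 * a + 3 * b + 4"]) (simp add: ab algebra_simps)
  qed
qed

lemma sin_th3_nat: "k \<ge> 1 \<Longrightarrow> sin (real k * th3) \<noteq> 0"
proof -
  assume k: "k \<ge> 1"
  obtain a b where ab: "XY k = (5 * a + 3, 5 * b + 4)" using XY_mod[OF k] by blast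
  have "5 * b + 4 \<noteq> 0" by presburger
  then have r: "real_of_int (5 * b + 4) \<noteq> 0" by (metis of_int_eq_0_iff)
  have "sin (real k * th3) = real_of_int (5 * b + 4) / 5 ^ k" using XY_trig[of k] by (simp only: ab snd_conv)
  then show ?thesis using r by simp
qed

lemma sin_th3_int: "(k::int) \<noteq> 0 \<Longrightarrow> sin (th3 * of_int k) \<noteq> 0"
proof -
  assume k: "k \<noteq> 0"
  have n: "nat \<bar>k\<bar> \<ge> 1" using k by simp
  have "sin (th3 * of_int \<bar>k\<bar>) \<noteq> 0"
    using sin_th3_nat[OF n] by (simp add: mult.commute)
  moreover have "sin (th3 * of_int \<bar>k\<bar>) = sin (th3 * of_int k) \<or> sin (th3 * of_int \<bar>k\<bar>) = - sin (th3 * of_int k)"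
    by (cases "k \<ge> 0") (simp_all add: abs_if)
  ultimately show ?thesis by auto
qed

lemma cos_th3_lt: "(k::int) \<noteq> 0 \<Longrightarrow> (cos (th3 * of_int k))\<^sup>2 < 1"
proof -
  assume "k \<noteq> 0"
  then have "(sin (th3 * of_int k))\<^sup>2 > 0" using sin_th3_int by simp
  then show ?thesis using sin_cos_squared_add[of "th3 * of_int k"] by linarith
qed

definition del3 :: "nat \<Rightarrow> int" where "del3 x = (if x = 0 then 1 else if x = 1 then -1 else 0)"
definition U3 :: "nat \<Rightarrow> complex mat" where "U3 x = rot (th3 * of_int (del3 x))"
definition e1 :: "complex vec" where "e1 = vec 2 (\<lambda>i. if i = 0 then 1 else 0)"
definition F3 :: "complex vec set" where "F3 = {v \<in> carrier_vec 2. v $ 1 = 0}"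
definition bal :: "nat word \<Rightarrow> nat \<Rightarrow> int" where "bal w n = (\<Sum>t<n. del3 (w t))"

lemma bal_Suc: "bal w (Suc n) = bal w n + del3 (w n)" unfolding bal_def by simp

lemma e1_carrier[simp]: "e1 \<in> carrier_vec 2" unfolding e1_def by simp

lemma run_rot:
  assumes "\<forall>t. m \<le> t \<and> t < m + k \<longrightarrow> t \<notin> range N"
    "disturbing_run U3 s0 \<psi> N w m = rot \<alpha> *\<^sub>v v" "v \<in> carrier_vec 2"
  shows "disturbing_run U3 s0 \<psi> N w (m + k) = rot (\<alpha> + th3 * of_int (bal w (m + k) - bal w m)) *\<^sub>v v"
  using assms(1)
proof (induction k)
  case 0 then show ?case using assms(2) by simp
next
  case (Suc k)
  have nr: "m + k \<notin> range N" using Suc.prems by simp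
  have IH: "disturbing_run U3 s0 \<psi> N w (m + k) = rot (\<alpha> + th3 * of_int (bal w (m + k) - bal w m)) *\<^sub>v v"
    using Suc by simp
  have "disturbing_run U3 s0 \<psi> N w (m + Suc k) = U3 (w (m + k)) *\<^sub>v disturbing_run U3 s0 \<psi> N w (m + k)"
    using nr by simp
  also have "\<dots> = rot (th3 * of_int (del3 (w (m + k))) + (\<alpha> + th3 * of_int (bal w (m + k) - bal w m))) *\<^sub>v v"
    unfolding IH U3_def using rot_rot[OF assms(3)] by simp
  also have "th3 * of_int (del3 (w (m + k))) + (\<alpha> + th3 * of_int (bal w (m + k) - bal w m))
      = \<alpha> + th3 * of_int (bal w (m + Suc k) - bal w m)"
    by (simp add: bal_Suc algebra_simps)
  finally show ?case .
qed

lemma run_terms: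
  assumes N: "checkpoints N" and psi: "\<psi> \<in> carrier_vec 2"
  shows "disturbing_run U3 e1 \<psi> N w (N 0) = rot (th3 * of_int (bal w (N 0))) *\<^sub>v e1"
    and "disturbing_run U3 e1 \<psi> N w (N (Suc i)) = rot (th3 * of_int (bal w (N (Suc i)) - bal w (N i))) *\<^sub>v \<psi>"
proof -
  have sm: "strict_mono N" using N unfolding checkpoints_def .
  have "disturbing_run U3 e1 \<psi> N w (0 + N 0) = rot (0 + th3 * of_int (bal w (0 + N 0) - bal w 0)) *\<^sub>v e1"
  proof (rule run_rot)
    show "\<forall>t. 0 \<le> t \<and> t < 0 + N 0 \<longrightarrow> t \<notin> range N"
      using sm by (auto simp: strict_mono_less_eq not_le[symmetric])
    show "disturbing_run U3 e1 \<psi> N w 0 = rot 0 *\<^sub>v e1" using rot_0 by simp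
  qed simp
  then show "disturbing_run U3 e1 \<psi> N w (N 0) = rot (th3 * of_int (bal w (N 0))) *\<^sub>v e1"
    by (simp add: bal_def)
  have lt: "N i < N (Suc i)" using sm by (simp add: strict_mono_def)
  define m where "m = Suc (N i)"
  define k where "k = N (Suc i) - m"
  have mk: "m + k = N (Suc i)" using lt unfolding m_def k_def by simp
  have "disturbing_run U3 e1 \<psi> N w (m + k) =
      rot (th3 * of_int (del3 (w (N i))) + th3 * of_int (bal w (m + k) - bal w m)) *\<^sub>v \<psi>"
  proof (rule run_rot[OF _ _ psi])
    show "\<forall>t. m \<le> t \<and> t < m + k \<longrightarrow> t \<notin> range N"
    proof (intro allI impI notI)
      fix t assume t: "m \<le> t \<and> t < m + k" "t \<in> range N"
      then obtain j where j: "t = N j" by auto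
      have "N i < N j" "N j < N (Suc i)" using t j mk unfolding m_def by auto
      then have "i < j" "j < Suc i" using sm strict_mono_less by blast+
      then show False by simp
    qed
    show "disturbing_run U3 e1 \<psi> N w m = rot (th3 * of_int (del3 (w (N i)))) *\<^sub>v \<psi>"
      unfolding m_def by (simp add: U3_def)
  qed
  then show "disturbing_run U3 e1 \<psi> N w (N (Suc i)) = rot (th3 * of_int (bal w (N (Suc i)) - bal w (N i))) *\<^sub>v \<psi>"
    unfolding mk unfolding m_def by (simp add: bal_Suc algebra_simps)
qed

lemma rot_val:
  assumes "v \<in> carrier_vec 2" "v $ 1 = 0" "cmod (v $ 0) = 1" "\<psi> \<in> carrier_vec 2" "\<psi> $ 1 = 0" "cmod (\<psi> $ 0) = 1"
  shows "(cmod ((rot \<phi> *\<^sub>v v) \<bullet>c \<psi>))\<^sup>2 = (cos \<phi>)\<^sup>2"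
proof -
  have "(rot \<phi> *\<^sub>v v) \<bullet>c \<psi> = complex_of_real (cos \<phi>) * v $ 0 * cnj (\<psi> $ 0)"
    using assms by (simp add: rot_vec scalar_prod_def sum2)
  then have "cmod ((rot \<phi> *\<^sub>v v) \<bullet>c \<psi>) = \<bar>cos \<phi>\<bar>" using assms by (simp add: norm_mult)
  then show ?thesis by simp
qed

lemma F3_unit: "\<psi> \<in> F3 \<Longrightarrow> unit_vec_in 2 \<psi> \<Longrightarrow> cmod (\<psi> $ 0) = 1"
proof -
  assume a: "\<psi> \<in> F3" "unit_vec_in 2 \<psi>"
  have d: "dim_vec \<psi> = 2" "\<psi> $ 1 = 0" using a unfolding F3_def by auto
  have "\<psi> \<bullet>c \<psi> = \<psi> $ 0 * cnj (\<psi> $ 0) + \<psi> $ 1 * cnj (\<psi> $ 1)"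
    by (simp add: scalar_prod_def d(1) sum2)
  then have "\<psi> $ 0 * cnj (\<psi> $ 0) = 1" using a(2) d(2) unfolding unit_vec_in_def by simp
  then have "complex_of_real ((cmod (\<psi> $ 0))\<^sup>2) = 1" by (simp add: complex_norm_square del: of_real_power)
  then have "(cmod (\<psi> $ 0))\<^sup>2 = 1" by (metis of_real_eq_1_iff)
  then show ?thesis using norm_ge_zero[of "\<psi> $ 0"] by (auto simp: power2_eq_1_iff)
qed

definition beta :: "nat word \<Rightarrow> (nat \<Rightarrow> nat) \<Rightarrow> nat \<Rightarrow> int" where
  "beta w N i = (if i = 0 then bal w (N 0) else bal w (N i) - bal w (N (i - 1)))"

lemma run_value3:
  assumes "\<psi> \<in> F3" "unit_vec_in 2 \<psi>" "checkpoints N"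
  shows "run_value U3 e1 \<psi> N w = (INF i. (cos (th3 * of_int (beta w N i)))\<^sup>2)"
proof -
  have pc: "\<psi> \<in> carrier_vec 2" "\<psi> $ 1 = 0" "cmod (\<psi> $ 0) = 1"
    using assms F3_unit unfolding F3_def by auto
  have e: "e1 $ 1 = 0" "cmod (e1 $ 0) = 1" unfolding e1_def by auto
  have "(cmod (disturbing_run U3 e1 \<psi> N w (N i) \<bullet>c \<psi>))\<^sup>2 = (cos (th3 * of_int (beta w N i)))\<^sup>2" for i
  proof (cases i)
    case 0 then show ?thesis using run_terms(1)[OF assms(3) pc(1)] rot_val[OF e1_carrier e pc]
      by (simp add: beta_def)
  next
    case (Suc j) then show ?thesis using run_terms(2)[OF assms(3) pc(1)] rot_val[OF pc(1) pc(2) pc(3) pc]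
      by (simp add: beta_def)
  qed
  then show ?thesis unfolding run_value_def by simp
qed

lemma bal_ww: "bal (ww 0 1 2 n p) t =
   (if t \<le> n + p then int t else if t \<le> 2 * n + p then int (2 * (n + p)) - int t else int p)"
proof (induction t)
  case 0 then show ?case by (simp add: bal_def)
next
  case (Suc t) then show ?case by (simp add: bal_Suc ww_def del3_def)
qed

lemma bal_ww_range: "0 \<le> bal (ww 0 1 2 n p) t \<and> bal (ww 0 1 2 n p) t \<le> int (n + p)"
  unfolding bal_ww by auto

lemma bal_ww_end: "t \<ge> 2 * n + p \<Longrightarrow> bal (ww 0 1 2 n p) t = int p"
  unfolding bal_ww by auto

definition L3 :: "nat word set" where "L3 = lang_eq1 2 e1 {0, 1, 2} U3 F3"

lemma QA3: "quantum_automaton 2 e1 {0, 1, 2} U3 F3"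
  unfolding quantum_automaton_def
proof (intro conjI)
  show "unit_vec_in 2 e1" unfolding unit_vec_in_def e1_def by (simp add: scalar_prod_def sum2)
  show "\<forall>a\<in>{0, 1, 2}. unitary_mat 2 (U3 a)" unfolding U3_def using rot_unitary by blast
  show "is_subspace 2 F3" unfolding is_subspace_def F3_def by auto
qed simp_all

lemma e1_F3: "e1 \<in> F3" "unit_vec_in 2 e1"
  using QA3 unfolding F3_def e1_def quantum_automaton_def by auto

lemma run_value_le1:
  assumes "\<psi> \<in> F3" "unit_vec_in 2 \<psi>" "checkpoints N"
  shows "run_value U3 e1 \<psi> N w \<le> 1"
proof -
  have "run_value U3 e1 \<psi> N w \<le> (cos (th3 * of_int (beta w N 0)))\<^sup>2"
    unfolding run_value3[OF assms] by (rule cINF_lower) (auto intro: bdd_belowI[of _ 0])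
  also have "\<dots> \<le> 1"
    using sin_cos_squared_add[of "th3 * of_int (beta w N 0)"] zero_le_power2[of "sin (th3 * of_int (beta w N 0))"]
    by linarith
  finally show ?thesis .
qed

lemma fD3_eq:
  assumes "S = {run_value U3 e1 \<psi> N w | \<psi> N. \<psi> \<in> F3 \<and> unit_vec_in 2 \<psi> \<and> checkpoints N}"
  shows "fD 2 e1 U3 F3 w = Sup S" and "S \<noteq> {}" and "bdd_above S"
proof -
  have "checkpoints id" by (simp add: checkpoints_def strict_mono_def)
  then have "run_value U3 e1 e1 id w \<in> S" unfolding assms using e1_F3 by blast
  then show ne: "S \<noteq> {}" by blast
  show "fD 2 e1 U3 F3 w = Sup S" unfolding fD_def Let_def assms[symmetric] by (rule if_not_P[OF ne])
  show "bdd_above S" unfolding assms using run_value_le1 by (intro bdd_aboveI[of _ 1]) auto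
qed

lemma L3_yes: "ww 0 1 2 n 0 \<in> L3"
proof -
  let ?w = "ww 0 1 2 n 0"
  define S where "S = {run_value U3 e1 \<psi> N ?w | \<psi> N. \<psi> \<in> F3 \<and> unit_vec_in 2 \<psi> \<and> checkpoints N}"
  define N where "N i = 2 * n + i" for i
  have N: "checkpoints N" unfolding N_def checkpoints_def strict_mono_def by simp
  have z: "bal ?w t = 0" if "t \<ge> 2 * n" for t using bal_ww_end[where t=t and n=n and p=0] that by simp
  have b: "beta ?w N i = 0" for i unfolding beta_def N_def using z by simp
  have "run_value U3 e1 e1 N ?w = 1" unfolding run_value3[OF e1_F3 N] b by simp
  then have "1 \<in> S" unfolding S_def using e1_F3 N by force
  moreover have "\<forall>x\<in>S. x \<le> 1" unfolding S_def using run_value_le1 by blast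
  ultimately have "Sup S = 1" by (intro cSup_eq_maximum) auto
  then have "fD 2 e1 U3 F3 ?w = 1" using fD3_eq(1)[OF S_def] by simp
  moreover have "range ?w \<subseteq> {0, 1, 2}" unfolding ww_def by auto
  ultimately show ?thesis unfolding L3_def lang_eq1_def by simp
qed

lemma L3_no:
  assumes p: "p > 0"
  shows "ww 0 1 2 n p \<notin> L3"
proof
  assume inL: "ww 0 1 2 n p \<in> L3"
  let ?w = "ww 0 1 2 n p"
  define M where "M = int (n + p)"
  define K where "K = {-M..M} - {0}"
  define C where "C = Max ((\<lambda>k. (cos (th3 * of_int k))\<^sup>2) ` K)"
  have Kfin: "finite K" unfolding K_def by simp
  have Kne: "1 \<in> K" unfolding K_def M_def using p by simp
  have C1: "C < 1"
  proof -
    have "C \<in> (\<lambda>k. (cos (th3 * of_int k))\<^sup>2) ` K" unfolding C_def using Kfin Kne by (intro Max_in) auto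
    then obtain k where "k \<in> K" "C = (cos (th3 * of_int k))\<^sup>2" by blast
    then show ?thesis using cos_th3_lt[of k] unfolding K_def by simp
  qed
  define S where "S = {run_value U3 e1 \<psi> N ?w | \<psi> N. \<psi> \<in> F3 \<and> unit_vec_in 2 \<psi> \<and> checkpoints N}"
  have le: "x \<le> C" if xS: "x \<in> S" for x
  proof -
    obtain \<psi> N where psi: "\<psi> \<in> F3" "unit_vec_in 2 \<psi>" and N: "checkpoints N" and x: "x = run_value U3 e1 \<psi> N ?w"
      using xS unfolding S_def by blast
    have "\<exists>i. beta ?w N i \<noteq> 0"
    proof (rule ccontr)
      assume "\<not> ?thesis"
      then have z: "beta ?w N i = 0" for i by simp
      have "bal ?w (N i) = 0" for i
      proof (induction i)
        case 0 then show ?case using z[of 0] unfolding beta_def by simp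
      next
        case (Suc i) then show ?case using z[of "Suc i"] unfolding beta_def by simp
      qed
      moreover have "N (2 * n + p) \<ge> 2 * n + p" using N unfolding checkpoints_def by (rule strict_mono_imp_increasing)
      moreover have "bal ?w (N (2 * n + p)) = int p" by (rule bal_ww_end) fact
      ultimately show False using p by simp
    qed
    then obtain i where i: "beta ?w N i \<noteq> 0" by blast
    have "beta ?w N i \<in> K"
      using i bal_ww_range[of n p] unfolding K_def M_def beta_def
      by (auto simp: abs_le_iff) (smt (verit))+
    then have "(cos (th3 * of_int (beta ?w N i)))\<^sup>2 \<le> C" unfolding C_def using Kfin by (intro Max_ge) auto
    moreover have "x \<le> (cos (th3 * of_int (beta ?w N i)))\<^sup>2"
      unfolding x run_value3[OF psi N] by (rule cINF_lower) (auto intro: bdd_belowI[of _ 0])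
    ultimately show ?thesis by simp
  qed
  have "fD 2 e1 U3 F3 ?w \<le> C" using fD3_eq(1,2)[OF S_def] le by (simp add: cSup_least)
  moreover have "fD 2 e1 U3 F3 ?w = 1" using inL unfolding L3_def lang_eq1_def by simp
  ultimately show False using C1 by simp
qed

lemma part3: "\<not> QBA_D_eq1 \<subseteq> omega_RL"
proof
  assume sub: "QBA_D_eq1 \<subseteq> omega_RL"
  have "L3 \<in> QBA_D_eq1" unfolding QBA_D_eq1_def L3_def using QA3 by blast
  moreover have "L3 \<notin> omega_RL" using L3_yes L3_no by (intro not_omega_RL) auto
  ultimately show False using sub by blast
qed

lemma split_unique:
  "u @ Inl A # v = map Inr p @ Inl B # map Inr q \<Longrightarrow> u = map Inr p \<and> A = B \<and> v = map Inr q"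
proof (induction u arbitrary: p)
  case Nil
  then show ?case by (cases p) auto
next
  case (Cons x u)
  show ?case
  proof (cases p)
    case Nil
    then have "u @ Inl A # v = map Inr q" using Cons.prems by simp
    then have "Inl A \<in> set (map Inr q)" by (metis in_set_conv_decomp)
    then show ?thesis by auto
  next
    case (Cons y p')
    then show ?thesis using Cons.prems Cons.IH[of p'] by auto
  qed
qed

lemma no_Inl: "u @ Inl A # v \<noteq> map Inr r"
proof
  assume "u @ Inl A # v = map Inr r"
  then have "Inl A \<in> set (map Inr r)" by (metis in_set_conv_decomp)
  then show False by auto
qed

lemma cfg_inv:
  assumes "(x, y) \<in> (cfg_step P)\<^sup>*" "x \<in> I" "\<And>x y. x \<in> I \<Longrightarrow> (x, y) \<in> cfg_step P \<Longrightarrow> y \<in> I"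
  shows "y \<in> I"
  using assms(1,2) by (induction rule: rtrancl_induct) (auto intro: assms(3))

lemma step_start:
  assumes "([Inl S], y) \<in> cfg_step P"
  shows "\<exists>rhs. (S, rhs) \<in> P \<and> y = rhs"
proof -
  obtain u v A rhs where e: "[Inl S] = u @ [Inl A] @ v" "y = u @ rhs @ v" "(A, rhs) \<in> P"
    using assms unfolding cfg_step_def by blast
  have "u = map Inr [] \<and> A = S \<and> v = map Inr []" using split_unique[of u A v "[]" S "[]"] e(1) by simp
  then show ?thesis using e by auto
qed

lemma step_terminal:
  assumes "(map Inr r, y) \<in> cfg_step P"
  shows False
proof -
  obtain u v A rhs where "(map Inr r, y) = (u @ [Inl A] @ v, u @ rhs @ v)"
    using assms unfolding cfg_step_def by blast
  then have "map Inr r = u @ [Inl A] @ v" by simp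
  then have "Inl A \<in> set (map Inr r)" by simp
  then show False by auto
qed

lemma cfl_single: "c \<in> \<Sigma> \<Longrightarrow> context_free_lang \<Sigma> {[c]}"
  unfolding context_free_lang_def
proof (intro exI conjI)
  assume c: "c \<in> \<Sigma>"
  let ?P = "{(0::nat, [Inr c])}"
  show "finite ?P" by simp
  show "\<forall>(A, rhs) \<in> ?P. \<forall>x \<in> set rhs. \<forall>a. x = Inr a \<longrightarrow> a \<in> \<Sigma>" using c by auto
  have st: "([Inl 0], [Inr c]) \<in> cfg_step ?P" unfolding cfg_step_def by force
  show "{[c]} = {w. set w \<subseteq> \<Sigma> \<and> ([Inl 0], map Inr w) \<in> (cfg_step ?P)\<^sup>*}"
  proof (intro equalityI subsetI)
    fix w assume "w \<in> {[c]}" then show "w \<in> {w. set w \<subseteq> \<Sigma> \<and> ([Inl 0], map Inr w) \<in> (cfg_step ?P)\<^sup>*}"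
      using c st by auto
  next
    fix w assume "w \<in> {w. set w \<subseteq> \<Sigma> \<and> ([Inl 0], map Inr w) \<in> (cfg_step ?P)\<^sup>*}"
    then have d: "([Inl 0], map Inr w) \<in> (cfg_step ?P)\<^sup>*" by simp
    have "map Inr w \<in> {[Inl (0::nat)], [Inr c]}"
    proof (rule cfg_inv[of "[Inl 0]" "map Inr w" ?P "{[Inl 0], [Inr c]}", OF d])
      fix x y assume "x \<in> {[Inl 0], [Inr c]}" "(x, y) \<in> cfg_step ?P"
      then show "y \<in> {[Inl 0], [Inr c]}"
        using step_start[of 0 y ?P] step_terminal[of "[c]" y ?P] by auto
    qed simp
    then show "w \<in> {[c]}" by (cases w) auto
  qed
qed

lemma cfl_empty: "context_free_lang \<Sigma> {[]}"
  unfolding context_free_lang_def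
proof (intro exI conjI)
  let ?P = "{(0::nat, [])}"
  show "finite ?P" by simp
  show "\<forall>(A, rhs) \<in> ?P. \<forall>x \<in> set rhs. \<forall>a. x = Inr a \<longrightarrow> a \<in> \<Sigma>" by auto
  have st: "([Inl 0], []) \<in> cfg_step ?P" unfolding cfg_step_def by force
  show "{[]} = {w. set w \<subseteq> \<Sigma> \<and> ([Inl 0], map Inr w) \<in> (cfg_step ?P)\<^sup>*}"
  proof (intro equalityI subsetI)
    fix w :: "'a list" assume "w \<in> {[]}" then show "w \<in> {w. set w \<subseteq> \<Sigma> \<and> ([Inl 0], map Inr w) \<in> (cfg_step ?P)\<^sup>*}"
      using st by auto
  next
    fix w :: "'a list" assume "w \<in> {w. set w \<subseteq> \<Sigma> \<and> ([Inl 0], map Inr w) \<in> (cfg_step ?P)\<^sup>*}"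
    then have d: "([Inl 0], map Inr w) \<in> (cfg_step ?P)\<^sup>*" by simp
    have "map Inr w \<in> {[Inl (0::nat)], []}"
    proof (rule cfg_inv[of "[Inl 0]" "map Inr w" ?P "{[Inl 0], []}", OF d])
      fix x y assume "x \<in> {[Inl 0], []}" "(x, y) \<in> cfg_step ?P"
      then show "y \<in> {[Inl 0], []}"
        using step_start[of 0 y ?P] step_terminal[of "[]" y ?P] by auto
    qed simp
    then show "w \<in> {[]}" by (cases w) auto
  qed
qed

definition U2 :: "nat list set" where "U2 = {replicate n 2 @ replicate n 3 | n. True}"

lemma cfl_U2: "2 \<in> \<Sigma> \<Longrightarrow> 3 \<in> \<Sigma> \<Longrightarrow> context_free_lang \<Sigma> U2"
  unfolding context_free_lang_def
proof (intro exI conjI)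
  assume s: "2 \<in> \<Sigma>" "3 \<in> \<Sigma>"
  let ?P = "{(0::nat, [Inr 2, Inl 0, Inr 3]), (0, [])}"
  let ?I = "{map Inr (replicate n 2) @ [Inl (0::nat)] @ map Inr (replicate n (3::nat)) | n. True}
     \<union> {map Inr (replicate n 2 @ replicate n 3) | n. True}"
  show "finite ?P" by simp
  show "\<forall>(A, rhs) \<in> ?P. \<forall>x \<in> set rhs. \<forall>a. x = Inr a \<longrightarrow> a \<in> \<Sigma>" using s by auto
  have st1: "(map Inr (replicate n 2) @ [Inl 0] @ map Inr (replicate n (3::nat)),
       map Inr (replicate (Suc n) 2) @ [Inl 0] @ map Inr (replicate (Suc n) 3)) \<in> cfg_step ?P" for n
    unfolding cfg_step_def
    by (rule CollectI, rule exI[of _ "map Inr (replicate n 2)"], rule exI[of _ "map Inr (replicate n 3)"],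
        rule exI[of _ 0], rule exI[of _ "[Inr 2, Inl 0, Inr 3]"]) (simp add: replicate_append_same[symmetric])
  have st2: "(map Inr (replicate n 2) @ [Inl 0] @ map Inr (replicate n (3::nat)),
       map Inr (replicate n 2 @ replicate n 3)) \<in> cfg_step ?P" for n
    unfolding cfg_step_def
    by (rule CollectI, rule exI[of _ "map Inr (replicate n 2)"], rule exI[of _ "map Inr (replicate n 3)"],
        rule exI[of _ 0], rule exI[of _ "[]"]) simp
  have reach: "([Inl 0], map Inr (replicate n 2) @ [Inl 0] @ map Inr (replicate n (3::nat))) \<in> (cfg_step ?P)\<^sup>*" for n
  proof (induction n)
    case 0 then show ?case by simp
  next
    case (Suc n) then show ?case using st1[of n] by (meson rtrancl.rtrancl_into_rtrancl)
  qed
  show "U2 = {w. set w \<subseteq> \<Sigma> \<and> ([Inl 0], map Inr w) \<in> (cfg_step ?P)\<^sup>*}"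
  proof (intro equalityI subsetI)
    fix w assume "w \<in> U2"
    then obtain n where w: "w = replicate n 2 @ replicate n 3" unfolding U2_def by blast
    have "([Inl 0], map Inr w) \<in> (cfg_step ?P)\<^sup>*" unfolding w using reach[of n] st2[of n]
      by (meson rtrancl.rtrancl_into_rtrancl)
    moreover have "set w \<subseteq> \<Sigma>" unfolding w using s by auto
    ultimately show "w \<in> {w. set w \<subseteq> \<Sigma> \<and> ([Inl 0], map Inr w) \<in> (cfg_step ?P)\<^sup>*}" by simp
  next
    fix w assume "w \<in> {w. set w \<subseteq> \<Sigma> \<and> ([Inl 0], map Inr w) \<in> (cfg_step ?P)\<^sup>*}"
    then have d: "([Inl 0], map Inr w) \<in> (cfg_step ?P)\<^sup>*" by simp
    have "map Inr w \<in> ?I"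
    proof (rule cfg_inv[of "[Inl 0]" "map Inr w" ?P ?I, OF d])
      show "[Inl 0] \<in> ?I" by (rule UnI1, rule CollectI, rule exI[of _ 0]) simp
      fix x y assume xI: "x \<in> ?I" and xy: "(x, y) \<in> cfg_step ?P"
      show "y \<in> ?I"
      proof (cases "x \<in> {map Inr (replicate n 2 @ replicate n 3) | n. True}")
        case True
        then obtain n where "x = map Inr (replicate n 2 @ replicate n (3::nat))" by blast
        then show ?thesis using step_terminal xy by blast
      next
        case False
        then obtain n where x: "x = map Inr (replicate n 2) @ [Inl 0] @ map Inr (replicate n (3::nat))"
          using xI by blast
        obtain u v A rhs where e: "x = u @ [Inl A] @ v" "y = u @ rhs @ v" "(A, rhs) \<in> ?P"
          using xy unfolding cfg_step_def by blast
        have uv: "u = map Inr (replicate n 2) \<and> v = map Inr (replicate n 3)"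
          using split_unique[of u A v "replicate n 2" 0 "replicate n 3"] e(1) x by simp
        show ?thesis
        proof (cases "rhs = []")
          case True
          then have "y = map Inr (replicate n 2 @ replicate n 3)" using e uv by simp
          then show ?thesis by blast
        next
          case False
          then have "rhs = [Inr 2, Inl 0, Inr 3]" using e(3) by auto
          then have "y = map Inr (replicate (Suc n) 2) @ [Inl 0] @ map Inr (replicate (Suc n) 3)"
            using e uv by (simp add: replicate_append_same[symmetric])
          then show ?thesis by blast
        qed
      qed
    qed
    then consider (a) n where "map Inr w = map Inr (replicate n 2) @ [Inl (0::nat)] @ map Inr (replicate n (3::nat))"
      | (b) n where "(map Inr w :: (nat + nat) list) = map Inr (replicate n 2 @ replicate n (3::nat))" by blast
    then obtain n where "(map Inr w :: (nat + nat) list) = map Inr (replicate n 2 @ replicate n (3::nat))"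
    proof cases
      case (a n)
      then have "Inl (0::nat) \<in> set (map Inr w)" by simp
      then show ?thesis by auto
    next
      case (b n) then show ?thesis using that by blast
    qed
    then have "w = replicate n 2 @ replicate n 3" by (metis inj_map_eq_map inj_Inr)
    then show "w \<in> U2" unfolding U2_def by blast
  qed
qed

lemma regular_single: "c \<in> \<Sigma> \<Longrightarrow> regular_lang \<Sigma> {[c]}"
  unfolding regular_lang_def
proof (intro exI conjI)
  assume c: "c \<in> \<Sigma>"
  let ?Q = "{0::nat, 1}" and ?d = "{(0::nat, c, 1::nat)}" and ?F = "{1::nat}"
  show "finite ?Q" "(0::nat) \<in> ?Q" "?F \<subseteq> ?Q" "?d \<subseteq> ?Q \<times> \<Sigma> \<times> ?Q" using c by auto
  show "{[c]} = {w. set w \<subseteq> \<Sigma> \<and> nfa_accepts ?Q 0 ?d ?F w}"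
  proof (intro equalityI subsetI)
    fix w assume "w \<in> {[c]}"
    then have w: "w = [c]" by simp
    have "nfa_accepts ?Q 0 ?d ?F [c]" unfolding nfa_accepts_def
      by (rule exI[of _ "[0, 1]"]) simp
    then show "w \<in> {w. set w \<subseteq> \<Sigma> \<and> nfa_accepts ?Q 0 ?d ?F w}" using w c by simp
  next
    fix w assume "w \<in> {w. set w \<subseteq> \<Sigma> \<and> nfa_accepts ?Q 0 ?d ?F w}"
    then obtain qs where qs: "length qs = Suc (length w)" "qs ! 0 = 0"
      "\<forall>i<length w. (qs ! i, w ! i, qs ! Suc i) \<in> ?d" "last qs \<in> ?F"
      unfolding nfa_accepts_def by blast
    show "w \<in> {[c]}"
    proof (cases w)
      case Nil
      then have "qs \<noteq> []" "length qs = 1" using qs(1) by auto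
      then have "last qs = qs ! 0" by (simp add: last_conv_nth)
      then show ?thesis using qs by simp
    next
      case (Cons x w')
      have t0: "x = c" "qs ! 1 = 1" using qs(3)[rule_format, of 0] Cons by auto
      have "w' = []"
      proof (rule ccontr)
        assume "w' \<noteq> []"
        then have "1 < length w" using Cons by simp
        then have "qs ! 1 = 0" using qs(3)[rule_format, of 1] by auto
        then show False using t0 by simp
      qed
      then show ?thesis using Cons t0 by simp
    qed
  qed
qed

lemma regular_empty: "regular_lang \<Sigma> {[]}"
  unfolding regular_lang_def
proof (intro exI conjI)
  let ?Q = "{0::nat}" and ?d = "{} :: (nat \<times> _ \<times> nat) set" and ?F = "{0::nat}"
  show "finite ?Q" "(0::nat) \<in> ?Q" "?F \<subseteq> ?Q" "?d \<subseteq> ?Q \<times> \<Sigma> \<times> ?Q" by auto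
  show "{[]} = {w. set w \<subseteq> \<Sigma> \<and> nfa_accepts ?Q 0 ?d ?F w}"
  proof (intro equalityI subsetI)
    fix w :: "'a list" assume "w \<in> {[]}"
    moreover have "nfa_accepts ?Q 0 ?d ?F []" unfolding nfa_accepts_def
      by (rule exI[of _ "[0]"]) simp
    ultimately show "w \<in> {w. set w \<subseteq> \<Sigma> \<and> nfa_accepts ?Q 0 ?d ?F w}" by simp
  next
    fix w :: "'a list" assume "w \<in> {w. set w \<subseteq> \<Sigma> \<and> nfa_accepts ?Q 0 ?d ?F w}"
    then obtain qs where qs: "\<forall>i<length w. (qs ! i, w ! i, qs ! Suc i) \<in> ?d"
      unfolding nfa_accepts_def by blast
    then show "w \<in> {[]}" by (cases w) auto
  qed
qed

lemma concat_single: "concat (map (\<lambda>_. [c]) xs) = map (\<lambda>_. c) xs"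
  by (induction xs) auto

lemma omega_pow_single: "omega_pow {[c]} = {\<lambda>_. c}"
proof (intro equalityI subsetI)
  fix x assume "x \<in> omega_pow {[c]}"
  then obtain v where v: "\<forall>i. v i \<in> {[c]} \<and> v i \<noteq> []" "is_inf_concat v x"
    unfolding omega_pow_def by blast
  have vc: "v = (\<lambda>_. [c])" using v(1) by auto
  have "x t = c" for t
  proof -
    have "prefix (\<Sum>i<Suc t. length (v i)) x = concat (map v [0..<Suc t])"
      using v(2) unfolding is_inf_concat_def by blast
    then have "prefix (Suc t) x = map (\<lambda>_. c) [0..<Suc t]" unfolding vc concat_single by simp
    then have "prefix (Suc t) x ! t = map (\<lambda>_. c) [0..<Suc t] ! t" by simp
    then show ?thesis by (simp add: subsequence_def del: upt_Suc)
  qed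
  then show "x \<in> {\<lambda>_. c}" by auto
next
  fix x :: "nat \<Rightarrow> 'a" assume "x \<in> {\<lambda>_. c}"
  then have x: "x = (\<lambda>_. c)" by simp
  have "is_inf_concat (\<lambda>_. [c]) x"
    unfolding is_inf_concat_def x concat_single by (simp add: subsequence_def)
  then show "x \<in> omega_pow {[c]}" unfolding omega_pow_def by auto
qed

lemma lang_conc_single: "lang_conc {u} W = (\<lambda>x. u \<frown> x) ` W"
  unfolding lang_conc_def by auto

lemma U2_word: "(replicate n 2 @ replicate n 3) \<frown> (\<lambda>_. 4) = ww 2 3 4 n 0"
proof
  fix t show "((replicate n 2 @ replicate n 3) \<frown> (\<lambda>_. 4)) t = ww 2 3 4 n 0 t"
    by (cases "t < 2 * n") (auto simp: ww_def nth_append)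
qed

lemma lang_U2: "lang_conc U2 {\<lambda>_. 4} = {ww 2 3 4 n 0 | n. True}"
proof (intro equalityI subsetI)
  fix y assume "y \<in> lang_conc U2 {\<lambda>_. 4}"
  then obtain n where "y = (replicate n 2 @ replicate n 3) \<frown> (\<lambda>_. 4)"
    unfolding lang_conc_def U2_def by blast
  then show "y \<in> {ww 2 3 4 n 0 | n. True}" using U2_word by auto
next
  fix y assume "y \<in> {ww 2 3 4 n 0 | n. True}"
  then obtain n where "y = ww 2 3 4 n 0" by blast
  then have "y = (replicate n 2 @ replicate n 3) \<frown> (\<lambda>_. 4)" using U2_word by simp
  then show "y \<in> lang_conc U2 {\<lambda>_. 4}" unfolding lang_conc_def U2_def by blast
qed

definition z0 :: "nat word" where "z0 = (\<lambda>_. 0)"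
definition L1 :: "nat word set" where "L1 = {z0, [1] \<frown> z0}"
definition L2 :: "nat word set" where "L2 = {z0, [1] \<frown> z0} \<union> {ww 2 3 4 n 0 | n. True}"

lemma L1_eq: "L1 = (\<Union>(U, V) \<in> set [({[]}, {[0]}), ({[1]}, {[0]})]. lang_conc U (omega_pow V))"
  unfolding L1_def z0_def by (simp add: lang_conc_single omega_pow_single insert_commute)

lemma L2_eq: "L2 = (\<Union>(U, V) \<in> set [({[]}, {[0]}), ({[1]}, {[0]}), (U2, {[4]})]. lang_conc U (omega_pow V))"
  unfolding L2_def z0_def by (simp add: lang_conc_single omega_pow_single lang_U2 insert_commute)

lemma L1_RL: "L1 \<in> omega_RL"
  unfolding omega_RL_def L1_eq
  by (rule CollectI, rule exI[of _ "{0, 1}"], rule exI[of _ "[({[]}, {[0]}), ({[1]}, {[0]})]"])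
     (simp add: regular_single regular_empty)

lemma L2_CFL: "L2 \<in> omega_CFL"
  unfolding omega_CFL_def L2_eq
  by (rule CollectI, rule exI[of _ "{0, 1, 2, 3, 4}"], rule exI[of _ "[({[]}, {[0]}), ({[1]}, {[0]}), (U2, {[4]})]"])
     (simp add: cfl_single cfl_empty cfl_U2)

lemma wk_not: "(\<lambda>t. if t < k then 0 else 1::nat) \<notin> L2"
proof
  let ?w = "\<lambda>t. if t < k then 0 else 1::nat"
  assume "?w \<in> L2"
  then consider "?w = z0" | "?w = [1] \<frown> z0" | n where "?w = ww 2 3 4 n 0" unfolding L2_def by blast
  then show False
  proof cases
    case 1 from this have "?w k = z0 k" by (rule fun_cong)
    then show False unfolding z0_def by simp
  next
    case 2 from this have "?w (Suc k) = ([1] \<frown> z0) (Suc k)" by (rule fun_cong)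
    then show False unfolding z0_def by simp
  next
    case (3 n) from this have "?w k = ww 2 3 4 n 0 k" by (rule fun_cong)
    then show False unfolding ww_def by (simp split: if_splits)
  qed
qed

lemma L1_sub: "L1 \<subseteq> L2" unfolding L1_def L2_def by auto

lemma L2_no: "p > 0 \<Longrightarrow> ww 2 3 4 n p \<notin> L2"
proof
  assume p: "p > 0" and "ww 2 3 4 n p \<in> L2"
  then consider "ww 2 3 4 n p = z0" | "ww 2 3 4 n p = [1] \<frown> z0" | m where "ww 2 3 4 n p = ww 2 3 4 m 0"
    unfolding L2_def by blast
  then show False
  proof cases
    case 1 from this have "ww 2 3 4 n p 0 = z0 0" by (rule fun_cong)
    then show False using p unfolding z0_def ww_def by simp
  next
    case 2 from this have "ww 2 3 4 n p 0 = ([1] \<frown> z0) 0" by (rule fun_cong)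
    then show False using p unfolding z0_def ww_def by simp
  next
    case (3 m)
    show False
    proof (cases "m < n + p")
      case True
      from 3 have "ww 2 3 4 n p m = ww 2 3 4 m 0 m" by (rule fun_cong)
      then show False using True unfolding ww_def by (simp split: if_splits)
    next
      case False
      from 3 have "ww 2 3 4 n p (2 * n + p) = ww 2 3 4 m 0 (2 * n + p)" by (rule fun_cong)
      then show False using False p unfolding ww_def by (simp split: if_splits)
    qed
  qed
qed

lemma L2_yes: "ww 2 3 4 n 0 \<in> L2" unfolding L2_def by blast

theorem theorem9:
  shows "(\<forall>lam::real. 0 \<le> lam \<and> lam < 1 \<longrightarrow> \<not> omega_RL \<subseteq> QBA_D_gt lam)
       \<and> (\<forall>lam::real. 0 \<le> lam \<and> lam < 1 \<longrightarrow> \<not> (omega_CFL - omega_RL) \<subseteq> QBA_D_gt lam)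
       \<and> \<not> QBA_D_eq1 \<subseteq> omega_RL"
proof (intro conjI allI impI)
  fix lam :: real assume lam: "0 \<le> lam \<and> lam < 1"
  have "L1 \<notin> QBA_D_gt lam"
  proof (rule not_QBA_gt)
    show "(\<lambda>_. 0::nat) \<in> L1" unfolding L1_def z0_def by simp
    show "[1] \<frown> z0 \<in> L1" unfolding L1_def by simp
    show "([1] \<frown> z0) 0 = 1" by simp
    show "\<forall>k. (\<lambda>t. if t < k then 0 else 1::nat) \<notin> L1" using wk_not L1_sub by blast
  qed (use lam in auto)
  then show "\<not> omega_RL \<subseteq> QBA_D_gt lam" using L1_RL by blast
next
  fix lam :: real assume lam: "0 \<le> lam \<and> lam < 1"
  have "L2 \<notin> QBA_D_gt lam"
  proof (rule not_QBA_gt)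
    show "(\<lambda>_. 0::nat) \<in> L2" unfolding L2_def z0_def by simp
    show "[1] \<frown> z0 \<in> L2" unfolding L2_def by simp
    show "([1] \<frown> z0) 0 = 1" by simp
    show "\<forall>k. (\<lambda>t. if t < k then 0 else 1::nat) \<notin> L2" using wk_not by blast
  qed (use lam in auto)
  moreover have "L2 \<notin> omega_RL" using L2_yes L2_no by (intro not_omega_RL) auto
  ultimately show "\<not> (omega_CFL - omega_RL) \<subseteq> QBA_D_gt lam" using L2_CFL by blast
next
  show "\<not> QBA_D_eq1 \<subseteq> omega_RL" by (rule part3)
qed

end
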